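(* In type $A_{n-1}$, every intersection of shards of the Coxeter arrangement equals $C(w)$ for some $w\in S_n$, and for every $w\in S_n$ the cone $C(w)$ is an intersection of shards.
   Context: Shards. Let $V$ be a real Euclidean space with inner product $\langle\cdot,\cdot\rangle$, $\Phi\subset V$ a finite root system with a chosen set of positive roots $\Phi^+$, and $\mathcal A=\{H_\beta:\beta\in\Phi^+\}$ with $H_\beta=\{\lambda\in V:\langle\lambda,\beta\rangle=0\}$ (the Coxeter arrangement). The base region is $B=\{\lambda\in V:\langle\lambda,\beta\rangle>0\text{ for all }\beta\in\Phi^+\}$. For distinct $H,H'\in\mathcal A$ let $\mathcal A(H,H')$ be the set of hyperplanes of $\mathcal A$ containing $H\cap H'$ (a rank two subarrangement). Exactly one connected component $B'$ of $V\setminus\bigcup\mathcal A(H,H')$ contains $B$, and exactly two hyperplanes of $\mathcal A(H,H')$ contain facets of the closure of $B'$; these are the basic hyperplanes of $\mathcal A(H,H')$. Each non-basic $H''\in\mathcal A(H,H')$ is said to be cut by each of the two basic hyperplanes of $\mathcal A(H,H')$. For $H\in\mathcal A$ let $L_H$ be the set of hyperplanes of $\mathcal A$ that cut $H$ in some rank two subarrangement; the shards of $H$ are the closures of the connected components of $H\setminus\bigcup_{H_\gamma\in L_H}(H\cap H_\gamma)$. A shard of $\mathcal A$ is a shard of some $H\in\mathcal A$. An intersection of shards is $\bigcap_{\Sigma\in S}\Sigma$ for a finite set $S$ of shards (the empty intersection is $V$). Type $A_{n-1}$: $V=\{x\in\mathbb R^n:\sum_i x_i=0\}$, $\Phi^+=\{\varepsilon_j-\varepsilon_i:1\le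 i<j\le n\}$, hyperplanes $H_{i,j}=\{x\in V:x_i=x_j\}$, $B=\{x_1<\cdots<x_n\}$. For $w=w(1)\cdots w(n)\in S_n$, the blocks of $w$ are the sets of letters of its maximal decreasing runs (maximal consecutive factors $w(a)>w(a+1)>\cdots>w(b)$). The cone $C(w)\subseteq V$ is the set of $x\in V$ such that: (i) $x_i=x_j$ whenever $i,j$ lie in the same block of $w$; (ii) whenever $i<k<j$ with $i,j$ in the same block and $k$ not in that block, $x_k\le x_i$ if $k$ appears to the left of $i$ in $w$, and $x_i\le x_k$ if $k$ appears to the right of $i$ in $w$. *)

theory Defs
  imports "HOL-Analysis.Analysis" "HOL-Combinatorics.Permutations"
begin

text \<open>Vectors of R^n are functions nat => real supported on {1..n};
  the topology is the product topology on nat => real (which on the finite-dimensional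
  space V coincides with the Euclidean topology).\<close>

definition VA :: "nat \<Rightarrow> (nat \<Rightarrow> real) set" where
  "VA n = {x. (\<forall>i. i \<notin> {1..n} \<longrightarrow> x i = 0) \<and> (\<Sum>i=1..n. x i) = 0}"

definition HA :: "nat \<Rightarrow> nat \<Rightarrow> nat \<Rightarrow> (nat \<Rightarrow> real) set" where
  "HA n i j = {x \<in> VA n. x i = x j}"

definition arrA :: "nat \<Rightarrow> (nat \<Rightarrow> real) set set" where
  "arrA n = {HA n i j | i j. 1 \<le> i \<and> i < j \<and> j \<le> n}"

definition baseA :: "nat \<Rightarrow> (nat \<Rightarrow> real) set" where
  "baseA n = {x \<in> VA n. \<forall>i j. 1 \<le> i \<and> i < j \<and> j \<le> n \<longrightarrow> x i < x j}"

definition subarr :: "nat \<Rightarrow> (nat \<Rightarrow> real) set \<Rightarrow> (nat \<Rightarrow> real) set \<Rightarrow> (nat \<Rightarrow> real) set set" where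
  "subarr n H H' = {K \<in> arrA n. H \<inter> H' \<subseteq> K}"

definition baseComp :: "nat \<Rightarrow> (nat \<Rightarrow> real) set \<Rightarrow> (nat \<Rightarrow> real) set \<Rightarrow> (nat \<Rightarrow> real) set" where
  "baseComp n H H' = (THE C. C \<in> components (VA n - \<Union>(subarr n H H')) \<and> baseA n \<subseteq> C)"

text \<open>A hyperplane K contains a facet of the closed polyhedral cone closure C
  iff K \<inter> closure C has nonempty interior relative to K.\<close>
definition contains_facet :: "(nat \<Rightarrow> real) set \<Rightarrow> (nat \<Rightarrow> real) set \<Rightarrow> bool" where
  "contains_facet K C \<longleftrightarrow> (\<exists>U. open U \<and> U \<inter> K \<noteq> {} \<and> U \<inter> K \<subseteq> closure C)"

definition basic :: "nat \<Rightarrow> (nat \<Rightarrow> real) set \<Rightarrow> (nat \<Rightarrow> real) set \<Rightarrow> (nat \<Rightarrow> real) set \<Rightarrow> bool" where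
  "basic n H H' K \<longleftrightarrow> K \<in> subarr n H H' \<and> contains_facet K (baseComp n H H')"

definition cuts :: "nat \<Rightarrow> (nat \<Rightarrow> real) set \<Rightarrow> (nat \<Rightarrow> real) set \<Rightarrow> bool" where
  "cuts n K H'' \<longleftrightarrow> (\<exists>H \<in> arrA n. \<exists>H' \<in> arrA n. H \<noteq> H' \<and>
      H'' \<in> subarr n H H' \<and> \<not> basic n H H' H'' \<and> basic n H H' K)"

definition cutters :: "nat \<Rightarrow> (nat \<Rightarrow> real) set \<Rightarrow> (nat \<Rightarrow> real) set set" where
  "cutters n H = {K \<in> arrA n. cuts n K H}"

definition shards_of :: "nat \<Rightarrow> (nat \<Rightarrow> real) set \<Rightarrow> (nat \<Rightarrow> real) set set" where
  "shards_of n H = closure ` components (H - (\<Union>K \<in> cutters n H. H \<inter> K))"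

definition shardsA :: "nat \<Rightarrow> (nat \<Rightarrow> real) set set" where
  "shardsA n = (\<Union>H \<in> arrA n. shards_of n H)"

definition shard_intersections :: "nat \<Rightarrow> (nat \<Rightarrow> real) set set" where
  "shard_intersections n = {VA n \<inter> \<Inter>S | S. finite S \<and> S \<subseteq> shardsA n}"

text \<open>Permutations w of {1..n} in one-line notation w(1)...w(n); blocks are the letter
  sets of maximal decreasing runs w(a) > ... > w(b).\<close>
definition blocks :: "nat \<Rightarrow> (nat \<Rightarrow> nat) \<Rightarrow> nat set set" where
  "blocks n w = {w ` {a..b} | a b. 1 \<le> a \<and> a \<le> b \<and> b \<le> n
      \<and> (\<forall>r. a \<le> r \<and> r < b \<longrightarrow> w r > w (Suc r))
      \<and> (a = 1 \<or> w (a - 1) < w a)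
      \<and> (b = n \<or> w b < w (Suc b))}"

definition coneC :: "nat \<Rightarrow> (nat \<Rightarrow> nat) \<Rightarrow> (nat \<Rightarrow> real) set" where
  "coneC n w = {x \<in> VA n.
      (\<forall>Bk \<in> blocks n w. \<forall>i \<in> Bk. \<forall>j \<in> Bk. x i = x j) \<and>
      (\<forall>Bk \<in> blocks n w. \<forall>i \<in> Bk. \<forall>j \<in> Bk. \<forall>k. i < k \<and> k < j \<and> k \<notin> Bk \<longrightarrow>
          (inv w k < inv w i \<longrightarrow> x k \<le> x i) \<and> (inv w i < inv w k \<longrightarrow> x i \<le> x k))}"

end

theory Submission
  imports Defs
begin


definition center :: "nat \<Rightarrow> (nat \<Rightarrow> real) \<Rightarrow> nat \<Rightarrow> real" where
  "center n g = (\<lambda>i. if i \<in> {1..n} then g i - (\<Sum>k=1..n. g k) / real n else 0)"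

lemma center_VA: "center n g \<in> VA n"
proof -
  have "(\<Sum>i=1..n. center n g i) = (\<Sum>i=1..n. g i - (\<Sum>k=1..n. g k) / real n)"
    by (rule sum.cong) (auto simp: center_def)
  also have "\<dots> = (\<Sum>i=1..n. g i) - real n * ((\<Sum>k=1..n. g k) / real n)"
    by (simp add: sum_subtractf)
  also have "\<dots> = 0" by (cases "n = 0") auto
  finally show ?thesis by (auto simp: VA_def center_def)
qed

lemma center_diff: "i \<in> {1..n} \<Longrightarrow> j \<in> {1..n} \<Longrightarrow> center n g i - center n g j = g i - g j"
  by (simp add: center_def)

lemma center_eq: "i \<in> {1..n} \<Longrightarrow> j \<in> {1..n} \<Longrightarrow> center n g i = center n g j \<longleftrightarrow> g i = g j"
  using center_diff[of i n j g] by linarith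

lemma center_less: "i \<in> {1..n} \<Longrightarrow> j \<in> {1..n} \<Longrightarrow> center n g i < center n g j \<longleftrightarrow> g i < g j"
  using center_diff[of i n j g] by linarith

lemma center_le: "i \<in> {1..n} \<Longrightarrow> j \<in> {1..n} \<Longrightarrow> center n g i \<le> center n g j \<longleftrightarrow> g i \<le> g j"
  using center_diff[of i n j g] by linarith

lemma VA_comb: assumes "x \<in> VA n" "y \<in> VA n" shows "(\<lambda>i. a * x i + b * y i) \<in> VA n"
proof -
  have "(\<Sum>i=1..n. a * x i + b * y i) = a * (\<Sum>i=1..n. x i) + b * (\<Sum>i=1..n. y i)"
    by (simp add: sum.distrib sum_distrib_left)
  then show ?thesis using assms by (auto simp: VA_def)
qed

lemma VA_lin: assumes "x \<in> VA n" "y \<in> VA n" shows "(\<lambda>i. x i + t * y i) \<in> VA n"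
  using VA_comb[OF assms, of 1 t] by simp

lemma cont_coord[continuous_intros]: "continuous_on S (\<lambda>x::nat\<Rightarrow>real. x i)"
  by (rule continuous_on_subset[OF continuous_on_product_coordinates]) auto

lemma cont_line: "continuous_on S (\<lambda>t::real. (\<lambda>i. y i + t * d i :: real))"
  by (intro continuous_intros)

lemma closed_VA: "closed (VA n)"
proof -
  have "VA n = (\<Inter>i\<in>-{1..n}. {x. x i = 0}) \<inter> {x. (\<Sum>i=1..n. x i) = 0}"
    by (auto simp: VA_def)
  moreover have "closed {x::nat\<Rightarrow>real. (\<Sum>i=1..n. x i) = 0}"
    by (intro closed_Collect_eq continuous_intros)
  moreover have "closed {x::nat\<Rightarrow>real. x i = 0}" for i
    by (intro closed_Collect_eq continuous_intros)
  ultimately show ?thesis by (metis closed_INT closed_Int)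
qed

lemma closed_le: "closed {x::nat\<Rightarrow>real. x k \<le> x l}"
  by (intro closed_Collect_le continuous_intros)
lemma closed_eqc: "closed {x::nat\<Rightarrow>real. x k = x l}"
  by (intro closed_Collect_eq continuous_intros)
lemma open_less: "open {x::nat\<Rightarrow>real. x k < x l}"
  by (intro open_Collect_less continuous_intros)

lemma closure_by_path:
  fixes \<gamma> :: "real \<Rightarrow> nat \<Rightarrow> real"
  assumes "continuous_on UNIV \<gamma>" "\<And>t. t > 0 \<Longrightarrow> \<gamma> t \<in> A"
  shows "\<gamma> 0 \<in> closure A"
proof -
  have "\<gamma> ` closure {0<..} \<subseteq> closure A"
    by (rule image_closure_subset) (use assms in \<open>auto intro: continuous_on_subset closure_subset[THEN subsetD]\<close>)
  then show ?thesis by auto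
qed

lemma sign_const:
  fixes f :: "'a::topological_space \<Rightarrow> real"
  assumes "connected D" "continuous_on D f" "\<forall>x\<in>D. f x \<noteq> 0" "a \<in> D" "f a > 0" "b \<in> D"
  shows "f b > 0"
proof (rule ccontr)
  assume "\<not> f b > 0" then have fb: "f b < 0" using assms by force
  have "connected (f ` D)" by (rule connected_continuous_image) (use assms in auto)
  then have "{f b..f a} \<subseteq> f ` D" using connected_contains_Icc assms by blast
  then have "0 \<in> f ` D" using fb \<open>f a > 0\<close> by auto
  then show False using assms by auto
qed

lemma connected_by_segments:
  assumes "\<And>x y t. x \<in> C \<Longrightarrow> y \<in> C \<Longrightarrow> 0 \<le> t \<Longrightarrow> t \<le> 1 \<Longrightarrow> (\<lambda>i. (1 - t) * x i + t * y i) \<in> C"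
  shows "connected (C :: (nat \<Rightarrow> real) set)"
proof (rule path_connected_imp_connected)
  show "path_connected C"
    unfolding path_connected_def
  proof (intro ballI)
    fix x y assume xy: "x \<in> C" "y \<in> C"
    let ?g = "\<lambda>t::real. (\<lambda>i. (1 - t) * x i + t * y i)"
    have "path ?g" unfolding path_def by (intro continuous_intros)
    moreover have "path_image ?g \<subseteq> C" unfolding path_image_def using assms xy by auto
    moreover have "pathstart ?g = x" "pathfinish ?g = y" by (auto simp: pathstart_def pathfinish_def)
    ultimately show "\<exists>g. path g \<and> path_image g \<subseteq> C \<and> pathstart g = x \<and> pathfinish g = y" by blast
  qed
qed

lemma comb_pos: "(a::real) > 0 \<Longrightarrow> b > 0 \<Longrightarrow> 0 \<le> t \<Longrightarrow> t \<le> 1 \<Longrightarrow> (1 - t) * a + t * b > 0"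
proof -
  assume h: "a > 0" "b > 0" "0 \<le> t" "t \<le> 1"
  show ?thesis
  proof (cases "t = 0")
    case True then show ?thesis using h by simp
  next
    case False then have "t * b > 0" using h by simp
    moreover have "(1 - t) * a \<ge> 0" using h by simp
    ultimately show ?thesis by linarith
  qed
qed

lemma cell_component:
  fixes T C :: "(nat\<Rightarrow>real) set" and f :: "'i \<Rightarrow> (nat\<Rightarrow>real) \<Rightarrow> real"
  assumes "C \<noteq> {}" "connected C" "C = {x\<in>T. \<forall>m\<in>M. f m x > 0}"
    "\<forall>m\<in>M. continuous_on UNIV (f m)" "\<forall>m\<in>M. \<forall>x\<in>T. f m x \<noteq> 0"
  shows "C \<in> components T"
  unfolding in_components_maximal
proof (intro conjI allI impI)
  show "C \<noteq> {}" "connected C" "C \<subseteq> T" using assms by auto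
  fix D assume D: "D \<noteq> {} \<and> C \<subseteq> D \<and> D \<subseteq> T \<and> connected D"
  obtain c where c: "c \<in> C" using assms by auto
  have "D \<subseteq> C"
  proof
    fix x assume x: "x \<in> D"
    have "\<forall>m\<in>M. f m x > 0"
    proof
      fix m assume m: "m \<in> M"
      show "f m x > 0"
        apply (rule sign_const[of D "f m" c])
        using D m assms c x by (auto intro: continuous_on_subset)
    qed
    then show "x \<in> C" using D x assms(3) by auto
  qed
  then show "D = C" using D by auto
qed




definition C0 :: "nat \<Rightarrow> (nat \<times> nat) set \<Rightarrow> (nat \<Rightarrow> real) set" where
  "C0 n Ps = {x\<in>VA n. \<forall>(k,l)\<in>Ps. x k < x l}"

abbreviation goodP :: "nat \<Rightarrow> (nat \<times> nat) set \<Rightarrow> bool" where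
  "goodP n Ps \<equiv> Ps \<subseteq> {(k,l). 1 \<le> k \<and> k < l \<and> l \<le> n}"

definition dvec :: "nat \<Rightarrow> nat \<Rightarrow> real" where "dvec n = center n real"

lemma dvec_diff: "k \<in> {1..n} \<Longrightarrow> l \<in> {1..n} \<Longrightarrow> dvec n l - dvec n k = real l - real k"
  unfolding dvec_def by (rule center_diff)

lemma baseA_ne: "dvec n \<in> baseA n"
  using dvec_diff[of _ n] by (auto simp: baseA_def dvec_def center_VA center_less)

lemma baseA_C0: "baseA n \<subseteq> C0 n Ps" if "goodP n Ps"
  using that by (auto simp: baseA_def C0_def)

lemma C0_component: assumes "goodP n Ps"
  shows "C0 n Ps \<in> components {x\<in>VA n. \<forall>(k,l)\<in>Ps. x k \<noteq> x l}"
proof (rule cell_component[where M = Ps and f = "\<lambda>(k,l) x. x l - x k"])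
  show "C0 n Ps \<noteq> {}" using baseA_ne baseA_C0[OF assms] by blast
  show "connected (C0 n Ps)"
  proof (rule connected_by_segments)
    fix x y and t :: real assume h: "x \<in> C0 n Ps" "y \<in> C0 n Ps" "0 \<le> t" "t \<le> 1"
    have "\<forall>(k,l)\<in>Ps. (1 - t) * x k + t * y k < (1 - t) * x l + t * y l"
    proof (clarify)
      fix k l assume "(k,l) \<in> Ps"
      then have "x l - x k > 0" "y l - y k > 0" using h by (auto simp: C0_def)
      from comb_pos[OF this h(3,4)] show "(1 - t) * x k + t * y k < (1 - t) * x l + t * y l"
        by (simp add: algebra_simps)
    qed
    then show "(\<lambda>i. (1 - t) * x i + t * y i) \<in> C0 n Ps"
      using h VA_comb[of x n y "1-t" t] by (auto simp: C0_def)
  qed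
  show "C0 n Ps = {x \<in> {x\<in>VA n. \<forall>(k,l)\<in>Ps. x k \<noteq> x l}. \<forall>m\<in>Ps. 0 < (case m of (k,l) \<Rightarrow> \<lambda>x::nat\<Rightarrow>real. x l - x k) x}"
    by (auto simp: C0_def)
  show "\<forall>m\<in>Ps. continuous_on UNIV (case m of (k,l) \<Rightarrow> \<lambda>x::nat\<Rightarrow>real. x l - x k)"
    by (auto intro!: continuous_on_diff cont_coord)
  show "\<forall>m\<in>Ps. \<forall>x\<in>{x\<in>VA n. \<forall>(k,l)\<in>Ps. x k \<noteq> x l}. (case m of (k,l) \<Rightarrow> \<lambda>x::nat\<Rightarrow>real. x l - x k) x \<noteq> 0"
    by auto
qed

lemma baseComp_eq:
  assumes "subarr n H H' = (\<lambda>(k,l). HA n k l) ` Ps" "goodP n Ps"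
  shows "baseComp n H H' = C0 n Ps"
proof -
  have e: "VA n - \<Union>(subarr n H H') = {x\<in>VA n. \<forall>(k,l)\<in>Ps. x k \<noteq> x l}"
    unfolding assms(1) by (auto simp: HA_def)
  show ?thesis unfolding baseComp_def e
  proof (rule the_equality)
    show "C0 n Ps \<in> components {x \<in> VA n. \<forall>(k,l)\<in>Ps. x k \<noteq> x l} \<and> baseA n \<subseteq> C0 n Ps"
      using C0_component[OF assms(2)] baseA_C0[OF assms(2)] by auto
    fix C assume C: "C \<in> components {x \<in> VA n. \<forall>(k,l)\<in>Ps. x k \<noteq> x l} \<and> baseA n \<subseteq> C"
    have "C \<inter> C0 n Ps \<noteq> {}" using C baseA_C0[OF assms(2)] baseA_ne by blast
    then show "C = C0 n Ps" using components_nonoverlap C C0_component[OF assms(2)] by blast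
  qed
qed

lemma closure_C0: assumes "goodP n Ps"
  shows "closure (C0 n Ps) = {x\<in>VA n. \<forall>(k,l)\<in>Ps. x k \<le> x l}"
proof
  have "{x\<in>VA n. \<forall>(k,l)\<in>Ps. x k \<le> x l} = VA n \<inter> (\<Inter>p\<in>Ps. {x. x (fst p) \<le> x (snd p)})"
    by fastforce
  moreover have "closed \<dots>" using closed_VA closed_le by (intro closed_Int closed_INT) auto
  ultimately show "closure (C0 n Ps) \<subseteq> {x\<in>VA n. \<forall>(k,l)\<in>Ps. x k \<le> x l}"
    by (intro closure_minimal) (auto simp: C0_def)
next
  show "{x\<in>VA n. \<forall>(k,l)\<in>Ps. x k \<le> x l} \<subseteq> closure (C0 n Ps)"
  proof
    fix y assume y: "y \<in> {x\<in>VA n. \<forall>(k,l)\<in>Ps. x k \<le> x l}"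
    let ?g = "\<lambda>t::real. (\<lambda>i. y i + t * dvec n i)"
    have "?g 0 \<in> closure (C0 n Ps)"
    proof (rule closure_by_path)
      show "continuous_on UNIV ?g" by (rule cont_line)
      fix t :: real assume t: "t > 0"
      have "\<forall>(k,l)\<in>Ps. y k + t * dvec n k < y l + t * dvec n l"
      proof clarify
        fix k l assume kl: "(k,l) \<in> Ps"
        then have "dvec n l - dvec n k = real l - real k" "k < l" "y k \<le> y l"
          using assms y by (auto intro!: dvec_diff)
        then have "t * (dvec n l - dvec n k) > 0" using t by simp
        then show "y k + t * dvec n k < y l + t * dvec n l" using \<open>y k \<le> y l\<close>
          by (simp add: algebra_simps)
      qed
      then show "?g t \<in> C0 n Ps" using y VA_lin[of y n "dvec n" t]
        by (auto simp: C0_def dvec_def center_VA)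
    qed
    then show "y \<in> closure (C0 n Ps)" by simp
  qed
qed

definition evec :: "nat \<Rightarrow> nat set \<Rightarrow> nat \<Rightarrow> real" where
  "evec n S = center n (\<lambda>i. if i \<in> S then 1 else 0)"

lemma evec_VA: "evec n S \<in> VA n" by (simp add: evec_def center_VA)
lemma evec_eq: "k \<in> {1..n} \<Longrightarrow> l \<in> {1..n} \<Longrightarrow> evec n S k = evec n S l \<longleftrightarrow> (k \<in> S \<longleftrightarrow> l \<in> S)"
  unfolding evec_def by (subst center_eq) auto
lemma evec_less: "k \<in> {1..n} \<Longrightarrow> l \<in> {1..n} \<Longrightarrow> evec n S k < evec n S l \<longleftrightarrow> (k \<notin> S \<and> l \<in> S)"
  unfolding evec_def by (subst center_less) auto

lemma HA_inj:
  assumes "1 \<le> a" "a < b" "b \<le> n" "1 \<le> c" "c < d" "d \<le> n" "HA n a b \<subseteq> HA n c d"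
  shows "a = c \<and> b = d"
proof (rule ccontr)
  assume ne: "\<not> (a = c \<and> b = d)"
  have "\<exists>S. evec n S \<in> HA n a b \<and> evec n S \<notin> HA n c d"
  proof (cases "c \<in> {a,b}")
    case False then show ?thesis using assms
      by (intro exI[of _ "{c}"]) (auto simp: HA_def evec_VA evec_eq)
  next
    case True
    then have "d \<notin> {a,b}" using ne assms by auto
    then show ?thesis using assms
      by (intro exI[of _ "{d}"]) (auto simp: HA_def evec_VA evec_eq)
  qed
  then show False using assms by auto
qed

lemma HA_inj': "1 \<le> a \<Longrightarrow> a < b \<Longrightarrow> b \<le> n \<Longrightarrow> 1 \<le> c \<Longrightarrow> c < d \<Longrightarrow> d \<le> n \<Longrightarrow>
  HA n a b = HA n c d \<longleftrightarrow> a = c \<and> b = d"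
  using HA_inj[of a b n c d] by auto




lemma evec_test: "E \<subseteq> HA n k l \<Longrightarrow> evec n S \<in> E \<Longrightarrow> k \<in> {1..n} \<Longrightarrow> l \<in> {1..n} \<Longrightarrow> (k \<in> S \<longleftrightarrow> l \<in> S)"
  using evec_eq[of k n l S] by (auto simp: HA_def)

lemma HA_arr: "1 \<le> k \<Longrightarrow> k < l \<Longrightarrow> l \<le> n \<Longrightarrow> HA n k l \<in> arrA n"
  by (auto simp: arrA_def)

lemma not_facet:
  assumes "1 \<le> p" "p < q" "q < r" "r \<le> n"
  shows "\<not> contains_facet (HA n p r) (C0 n {(p,q),(q,r),(p,r)})"
proof
  have cl: "closure (C0 n {(p,q),(q,r),(p,r)}) = {x\<in>VA n. x p \<le> x q \<and> x q \<le> x r \<and> x p \<le> x r}"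
    using assms by (subst closure_C0) auto
  assume "contains_facet (HA n p r) (C0 n {(p,q),(q,r),(p,r)})"
  then obtain U where U: "open U" "U \<inter> HA n p r \<noteq> {}" "U \<inter> HA n p r \<subseteq> closure (C0 n {(p,q),(q,r),(p,r)})"
    unfolding contains_facet_def by blast
  obtain y where y: "y \<in> U" "y \<in> HA n p r" using U by auto
  let ?g = "\<lambda>t::real. (\<lambda>i. y i + t * evec n {q} i)"
  have "open (?g -` U)" by (rule open_vimage) (use U cont_line in auto)
  moreover have "0 \<in> ?g -` U" using y by simp
  ultimately obtain e where e: "e > 0" "ball 0 e \<subseteq> ?g -` U" by (metis open_contains_ball)
  let ?t = "e / 2"
  have "?t \<in> ball 0 e" using e by simp
  then have "?t \<in> ?g -` U" using e(2) by blast
  then have gU: "?g ?t \<in> U" by (rule vimageD)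
  have ev1: "evec n {q} p = evec n {q} r" using assms by (subst evec_eq) auto
  have ev2: "evec n {q} q - evec n {q} p = 1" using assms unfolding evec_def by (subst center_diff) auto
  note ev = ev1 ev2
  have "?g ?t \<in> HA n p r" using y VA_lin[of y n "evec n {q}" ?t] evec_VA ev by (auto simp: HA_def)
  then have g: "?g ?t \<in> closure (C0 n {(p,q),(q,r),(p,r)})" using gU U by auto
  have "y \<in> closure (C0 n {(p,q),(q,r),(p,r)})" using y U by auto
  then have "y p = y q" using y cl by (auto simp: HA_def)
  moreover have "y q + ?t * evec n {q} q \<le> y r + ?t * evec n {q} r"
    "y p + ?t * evec n {q} p \<le> y q + ?t * evec n {q} q" using g cl by auto
  moreover have "y p = y r" using y by (auto simp: HA_def)
  moreover have "?t * (evec n {q} q - evec n {q} p) > 0" using ev e by simp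
  ultimately show False using ev by (simp add: algebra_simps)
qed

lemma triple:
  assumes "1 \<le> p" "p < q" "q < r" "r \<le> n"
    "H \<in> {HA n p q, HA n q r, HA n p r}" "H' \<in> {HA n p q, HA n q r, HA n p r}" "H \<noteq> H'"
  shows "subarr n H H' = {HA n p q, HA n q r, HA n p r}"
    and "basic n H H' K \<longleftrightarrow> K = HA n p q \<or> K = HA n q r"
proof -
  have int: "H \<inter> H' = {x\<in>VA n. x p = x q \<and> x q = x r}"
    using assms(5,6,7) by (auto simp: HA_def)
  show sub: "subarr n H H' = {HA n p q, HA n q r, HA n p r}"
  proof
    show "{HA n p q, HA n q r, HA n p r} \<subseteq> subarr n H H'"
      using assms(1-4) by (auto simp: subarr_def int HA_arr) (auto simp: HA_def)
    show "subarr n H H' \<subseteq> {HA n p q, HA n q r, HA n p r}"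
    proof
      fix K assume K: "K \<in> subarr n H H'"
      then obtain k l where kl: "K = HA n k l" "1 \<le> k" "k < l" "l \<le> n" "H \<inter> H' \<subseteq> HA n k l"
        by (auto simp: subarr_def arrA_def)
      have t: "(k \<in> S \<longleftrightarrow> l \<in> S)" if "(p \<in> S \<longleftrightarrow> q \<in> S) \<and> (q \<in> S \<longleftrightarrow> r \<in> S)" for S
        apply (rule evec_test[OF kl(5)])
        using that assms(1-4) kl by (auto simp: int evec_VA evec_eq)
      have "k \<in> {p,q,r}" using t[of "{k}"] kl(3) by auto
      moreover have "l \<in> {p,q,r}" using t[of "{l}"] kl(3) by auto
      ultimately show "K \<in> {HA n p q, HA n q r, HA n p r}" using kl assms(2,3) by auto
    qed
  qed
  have bc: "baseComp n H H' = C0 n {(p,q),(q,r),(p,r)}"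
    by (rule baseComp_eq) (use sub assms(1-4) in auto)
  have cl: "closure (C0 n {(p,q),(q,r),(p,r)}) = {x\<in>VA n. x p \<le> x q \<and> x q \<le> x r \<and> x p \<le> x r}"
    using assms by (subst closure_C0) auto
  have f1: "contains_facet (HA n p q) (C0 n {(p,q),(q,r),(p,r)})"
    unfolding contains_facet_def
  proof (intro exI conjI)
    show "open {x::nat\<Rightarrow>real. x q < x r}" by (rule open_less)
    have "evec n {r} \<in> {x. x q < x r} \<inter> HA n p q"
      using assms(1-4) evec_VA[of n "{r}"] by (auto simp: HA_def evec_eq evec_less)
    then show "{x. x q < x r} \<inter> HA n p q \<noteq> {}" by blast
    show "{x. x q < x r} \<inter> HA n p q \<subseteq> closure (C0 n {(p,q),(q,r),(p,r)})"
      unfolding cl by (auto simp: HA_def)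
  qed
  have f2: "contains_facet (HA n q r) (C0 n {(p,q),(q,r),(p,r)})"
    unfolding contains_facet_def
  proof (intro exI conjI)
    show "open {x::nat\<Rightarrow>real. x p < x q}" by (rule open_less)
    have "evec n {q,r} \<in> {x. x p < x q} \<inter> HA n q r"
      using assms(1-4) evec_VA[of n "{q,r}"] by (auto simp: HA_def evec_eq evec_less)
    then show "{x. x p < x q} \<inter> HA n q r \<noteq> {}" by blast
    show "{x. x p < x q} \<inter> HA n q r \<subseteq> closure (C0 n {(p,q),(q,r),(p,r)})"
      unfolding cl by (auto simp: HA_def)
  qed
  have f3: "\<not> contains_facet (HA n p r) (C0 n {(p,q),(q,r),(p,r)})"
    by (rule not_facet) (use assms in auto)
  show "basic n H H' K \<longleftrightarrow> K = HA n p q \<or> K = HA n q r"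
    unfolding basic_def sub bc using f1 f2 f3 by auto
qed

lemma disjoint:
  assumes "1 \<le> a" "a < b" "b \<le> n" "1 \<le> c" "c < d" "d \<le> n" "a \<noteq> c" "a \<noteq> d" "b \<noteq> c" "b \<noteq> d"
  shows "subarr n (HA n a b) (HA n c d) = {HA n a b, HA n c d}"
    and "basic n (HA n a b) (HA n c d) K \<longleftrightarrow> K = HA n a b \<or> K = HA n c d"
proof -
  have int: "HA n a b \<inter> HA n c d = {x\<in>VA n. x a = x b \<and> x c = x d}"
    by (auto simp: HA_def)
  show sub: "subarr n (HA n a b) (HA n c d) = {HA n a b, HA n c d}"
  proof
    show "{HA n a b, HA n c d} \<subseteq> subarr n (HA n a b) (HA n c d)"
      using assms(1-6) by (auto simp: subarr_def HA_arr)
    show "subarr n (HA n a b) (HA n c d) \<subseteq> {HA n a b, HA n c d}"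
    proof
      fix K assume K: "K \<in> subarr n (HA n a b) (HA n c d)"
      then obtain k l where kl: "K = HA n k l" "1 \<le> k" "k < l" "l \<le> n" "HA n a b \<inter> HA n c d \<subseteq> HA n k l"
        by (auto simp: subarr_def arrA_def)
      have t: "(k \<in> S \<longleftrightarrow> l \<in> S)" if "(a \<in> S \<longleftrightarrow> b \<in> S) \<and> (c \<in> S \<longleftrightarrow> d \<in> S)" for S
        apply (rule evec_test[OF kl(5)])
        using that assms(1-6) kl by (auto simp: int evec_VA evec_eq)
      have "k \<in> {a,b,c,d}" using t[of "{k}"] kl(3) by auto
      moreover have "l \<in> {a,b,c,d}" using t[of "{l}"] kl(3) by auto
      moreover have "k \<in> {a,b} \<longleftrightarrow> l \<in> {a,b}" using t[of "{a,b}"] assms by auto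
      ultimately show "K \<in> {HA n a b, HA n c d}" using kl assms by auto
    qed
  qed
  have bc: "baseComp n (HA n a b) (HA n c d) = C0 n {(a,b),(c,d)}"
    by (rule baseComp_eq) (use sub assms(1-6) in auto)
  have cl: "closure (C0 n {(a,b),(c,d)}) = {x\<in>VA n. x a \<le> x b \<and> x c \<le> x d}"
    using assms by (subst closure_C0) auto
  have f1: "contains_facet (HA n a b) (C0 n {(a,b),(c,d)})"
    unfolding contains_facet_def
  proof (intro exI conjI)
    show "open {x::nat\<Rightarrow>real. x c < x d}" by (rule open_less)
    have "evec n {d} \<in> {x. x c < x d} \<inter> HA n a b"
      using assms evec_VA[of n "{d}"] by (auto simp: HA_def evec_eq evec_less)
    then show "{x. x c < x d} \<inter> HA n a b \<noteq> {}" by blast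
    show "{x. x c < x d} \<inter> HA n a b \<subseteq> closure (C0 n {(a,b),(c,d)})"
      unfolding cl by (auto simp: HA_def)
  qed
  have f2: "contains_facet (HA n c d) (C0 n {(a,b),(c,d)})"
    unfolding contains_facet_def
  proof (intro exI conjI)
    show "open {x::nat\<Rightarrow>real. x a < x b}" by (rule open_less)
    have "evec n {b} \<in> {x. x a < x b} \<inter> HA n c d"
      using assms evec_VA[of n "{b}"] by (auto simp: HA_def evec_eq evec_less)
    then show "{x. x a < x b} \<inter> HA n c d \<noteq> {}" by blast
    show "{x. x a < x b} \<inter> HA n c d \<subseteq> closure (C0 n {(a,b),(c,d)})"
      unfolding cl by (auto simp: HA_def)
  qed
  show "basic n (HA n a b) (HA n c d) K \<longleftrightarrow> K = HA n a b \<or> K = HA n c d"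
    unfolding basic_def sub bc using f1 f2 by auto
qed




lemma classify:
  assumes "H \<in> arrA n" "H' \<in> arrA n" "H \<noteq> H'"
  shows "(\<exists>p q r. 1 \<le> p \<and> p < q \<and> q < r \<and> r \<le> n \<and> H \<in> {HA n p q, HA n q r, HA n p r}
            \<and> H' \<in> {HA n p q, HA n q r, HA n p r}) \<or>
         (\<exists>a b c d. 1 \<le> a \<and> a < b \<and> b \<le> n \<and> 1 \<le> c \<and> c < d \<and> d \<le> n \<and>
            a \<noteq> c \<and> a \<noteq> d \<and> b \<noteq> c \<and> b \<noteq> d \<and> H = HA n a b \<and> H' = HA n c d)"
proof -
  obtain a b c d where H: "H = HA n a b" "1 \<le> a" "a < b" "b \<le> n"
    and H': "H' = HA n c d" "1 \<le> c" "c < d" "d \<le> n"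
    using assms(1,2) by (auto simp: arrA_def)
  show ?thesis
  proof (cases "a = c")
    case True
    then have "b \<noteq> d" using assms(3) H H' by auto
    then show ?thesis
    proof (cases "b < d")
      case True then show ?thesis using H H' \<open>a = c\<close>
        by (intro disjI1 exI[of _ a] exI[of _ b] exI[of _ d]) auto
    next
      case False then have "d < b" using \<open>b \<noteq> d\<close> by auto
      then show ?thesis using H H' \<open>a = c\<close>
        by (intro disjI1 exI[of _ a] exI[of _ d] exI[of _ b]) auto
    qed
  next
    case ac: False
    show ?thesis
    proof (cases "b = d")
      case True
      show ?thesis
      proof (cases "a < c")
        case True then show ?thesis using H H' \<open>b = d\<close>
          by (intro disjI1 exI[of _ a] exI[of _ c] exI[of _ b]) auto
      next
        case False then have "c < a" using ac by auto
        then show ?thesis using H H' \<open>b = d\<close>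
          by (intro disjI1 exI[of _ c] exI[of _ a] exI[of _ b]) auto
      qed
    next
      case bd: False
      show ?thesis
      proof (cases "a = d")
        case True then show ?thesis using H H'
          by (intro disjI1 exI[of _ c] exI[of _ a] exI[of _ b]) auto
      next
        case ad: False
        show ?thesis
        proof (cases "b = c")
          case True then show ?thesis using H H'
            by (intro disjI1 exI[of _ a] exI[of _ b] exI[of _ d]) auto
        next
          case False then show ?thesis using H H' ac bd ad
            by (intro disjI2 exI[of _ a] exI[of _ b] exI[of _ c] exI[of _ d]) auto
        qed
      qed
    qed
  qed
qed

lemma cuts_iff:
  assumes "1 \<le> i" "i < j" "j \<le> n"
  shows "cuts n K (HA n i j) \<longleftrightarrow> (\<exists>k. i < k \<and> k < j \<and> (K = HA n i k \<or> K = HA n k j))"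
proof
  assume "cuts n K (HA n i j)"
  then obtain H H' where HH: "H \<in> arrA n" "H' \<in> arrA n" "H \<noteq> H'" "HA n i j \<in> subarr n H H'"
    "\<not> basic n H H' (HA n i j)" "basic n H H' K"
    unfolding cuts_def by blast
  from classify[OF HH(1-3)] show "\<exists>k. i < k \<and> k < j \<and> (K = HA n i k \<or> K = HA n k j)"
  proof (elim disjE exE conjE)
    fix p q r assume pqr: "1 \<le> p" "p < q" "q < r" "r \<le> n" "H \<in> {HA n p q, HA n q r, HA n p r}"
      "H' \<in> {HA n p q, HA n q r, HA n p r}"
    note tr = triple[OF pqr HH(3)]
    have "HA n i j \<in> {HA n p q, HA n q r, HA n p r}" using HH(4) tr(1) by simp
    moreover have "\<not> (HA n i j = HA n p q \<or> HA n i j = HA n q r)"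
      using HH(5) tr(2)[of "HA n i j"] by simp
    ultimately have "HA n i j = HA n p r" by blast
    then have "i = p" "j = r" using HA_inj'[of i j n p r] pqr assms by auto
    moreover have "K = HA n p q \<or> K = HA n q r" using HH(6) tr(2)[of K] by simp
    ultimately show ?thesis using pqr by blast
  next
    fix a b c d assume abcd: "1 \<le> a" "a < b" "b \<le> n" "1 \<le> c" "c < d" "d \<le> n"
      "a \<noteq> c" "a \<noteq> d" "b \<noteq> c" "b \<noteq> d" "H = HA n a b" "H' = HA n c d"
    note dj = disjoint[OF abcd(1-10)]
    have "HA n i j \<in> {HA n a b, HA n c d}" using HH(4) dj(1) abcd(11,12) by simp
    moreover have "\<not> (HA n i j = HA n a b \<or> HA n i j = HA n c d)"
      using HH(5) dj(2)[of "HA n i j"] abcd(11,12) by simp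
    ultimately show ?thesis by blast
  qed
next
  assume "\<exists>k. i < k \<and> k < j \<and> (K = HA n i k \<or> K = HA n k j)"
  then obtain k where k: "i < k" "k < j" "K = HA n i k \<or> K = HA n k j" by blast
  have ne: "HA n i k \<noteq> HA n k j" using HA_inj'[of i k n k j] k assms by auto
  have m1: "HA n i k \<in> {HA n i k, HA n k j, HA n i j}" "HA n k j \<in> {HA n i k, HA n k j, HA n i j}" by auto
  note tr = triple[of i k j n "HA n i k" "HA n k j", OF assms(1) k(1,2) assms(3) m1 ne]
  have n1: "HA n i j \<noteq> HA n i k" "HA n i j \<noteq> HA n k j"
    using HA_inj'[of i j n i k] HA_inj'[of i j n k j] k assms by auto
  have a1: "HA n i k \<in> arrA n" "HA n k j \<in> arrA n" using k assms by (auto intro: HA_arr)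
  have "HA n i j \<in> subarr n (HA n i k) (HA n k j)" using tr(1) by simp
  moreover have "\<not> basic n (HA n i k) (HA n k j) (HA n i j)" using tr(2)[of "HA n i j"] n1 by simp
  moreover have "basic n (HA n i k) (HA n k j) K" using tr(2)[of K] k(3) by simp
  ultimately show "cuts n K (HA n i j)" unfolding cuts_def using a1 ne by blast
qed

lemma cutters_eq:
  assumes "1 \<le> i" "i < j" "j \<le> n"
  shows "cutters n (HA n i j) = {K. \<exists>k. i < k \<and> k < j \<and> (K = HA n i k \<or> K = HA n k j)}"
  unfolding cutters_def cuts_iff[OF assms] using assms by (auto intro: HA_arr)

definition Tset :: "nat \<Rightarrow> nat \<Rightarrow> nat \<Rightarrow> (nat\<Rightarrow>real) set" where
  "Tset n i j = {x\<in>HA n i j. \<forall>k. i < k \<and> k < j \<longrightarrow> x k \<noteq> x i}"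

lemma T_eq:
  assumes "1 \<le> i" "i < j" "j \<le> n"
  shows "HA n i j - (\<Union>K \<in> cutters n (HA n i j). HA n i j \<inter> K) = Tset n i j"
proof -
  have "(\<Union>K \<in> cutters n (HA n i j). HA n i j \<inter> K) = {x\<in>HA n i j. \<exists>k. i < k \<and> k < j \<and> x k = x i}"
  proof (rule set_eqI, rule iffI)
    fix x assume "x \<in> (\<Union>K \<in> cutters n (HA n i j). HA n i j \<inter> K)"
    then show "x \<in> {x\<in>HA n i j. \<exists>k. i < k \<and> k < j \<and> x k = x i}"
      unfolding cutters_eq[OF assms] by (auto simp: HA_def)
  next
    fix x assume "x \<in> {x\<in>HA n i j. \<exists>k. i < k \<and> k < j \<and> x k = x i}"
    then obtain k where k: "x \<in> HA n i j" "i < k" "k < j" "x k = x i" by blast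
    then have "HA n i k \<in> cutters n (HA n i j)" "x \<in> HA n i j \<inter> HA n i k"
      unfolding cutters_eq[OF assms] by (auto simp: HA_def)
    then show "x \<in> (\<Union>K \<in> cutters n (HA n i j). HA n i j \<inter> K)" by blast
  qed
  then show ?thesis unfolding Tset_def by auto
qed

definition Pcell :: "nat \<Rightarrow> nat \<Rightarrow> nat \<Rightarrow> nat set \<Rightarrow> (nat\<Rightarrow>real) set" where
  "Pcell n i j S = {x\<in>HA n i j. \<forall>k. i < k \<and> k < j \<longrightarrow> (k \<in> S \<longrightarrow> x k < x i) \<and> (k \<notin> S \<longrightarrow> x i < x k)}"

definition Q :: "nat \<Rightarrow> nat \<Rightarrow> nat \<Rightarrow> nat set \<Rightarrow> (nat\<Rightarrow>real) set" where
  "Q n i j S = {x\<in>VA n. x i = x j \<and> (\<forall>k. i < k \<and> k < j \<longrightarrow> (k \<in> S \<longrightarrow> x k \<le> x i) \<and> (k \<notin> S \<longrightarrow> x i \<le> x k))}"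

definition gS :: "nat \<Rightarrow> nat \<Rightarrow> nat set \<Rightarrow> nat \<Rightarrow> real" where
  "gS i j S = (\<lambda>k. if i < k \<and> k < j then (if k \<in> S then -1 else 1) else 0)"

lemma Pcell_component:
  assumes "1 \<le> i" "i < j" "j \<le> n"
  shows "Pcell n i j S \<in> components (Tset n i j)"
proof (rule cell_component[where M = "{i<..<j}" and f = "\<lambda>k x. if k \<in> S then x i - x k else x k - x i"])
  have "center n (gS i j S) \<in> Pcell n i j S"
    using assms by (auto simp: Pcell_def HA_def center_VA center_eq center_less gS_def)
  then show "Pcell n i j S \<noteq> {}" by blast
  show "connected (Pcell n i j S)"
  proof (rule connected_by_segments)
    fix x y and t :: real assume h: "x \<in> Pcell n i j S" "y \<in> Pcell n i j S" "0 \<le> t" "t \<le> 1"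
    have "\<forall>k. i < k \<and> k < j \<longrightarrow> (k \<in> S \<longrightarrow> (1 - t) * x k + t * y k < (1 - t) * x i + t * y i)
       \<and> (k \<notin> S \<longrightarrow> (1 - t) * x i + t * y i < (1 - t) * x k + t * y k)"
    proof (intro allI impI conjI)
      fix k assume k: "i < k \<and> k < j" "k \<in> S"
      then have "x i - x k > 0" "y i - y k > 0" using h by (auto simp: Pcell_def)
      from comb_pos[OF this h(3,4)] show "(1 - t) * x k + t * y k < (1 - t) * x i + t * y i"
        by (simp add: algebra_simps)
    next
      fix k assume k: "i < k \<and> k < j" "k \<notin> S"
      then have "x k - x i > 0" "y k - y i > 0" using h by (auto simp: Pcell_def)
      from comb_pos[OF this h(3,4)] show "(1 - t) * x i + t * y i < (1 - t) * x k + t * y k"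
        by (simp add: algebra_simps)
    qed
    then show "(\<lambda>i. (1 - t) * x i + t * y i) \<in> Pcell n i j S"
      using h VA_comb[of x n y "1-t" t] by (auto simp: Pcell_def HA_def)
  qed
  show "Pcell n i j S = {x \<in> Tset n i j. \<forall>m\<in>{i<..<j}. 0 < (if m \<in> S then x i - x m else x m - x i)}"
    by (auto simp: Pcell_def Tset_def)
  show "\<forall>m\<in>{i<..<j}. continuous_on UNIV (\<lambda>x::nat\<Rightarrow>real. if m \<in> S then x i - x m else x m - x i)"
  proof
    fix m show "continuous_on UNIV (\<lambda>x::nat\<Rightarrow>real. if m \<in> S then x i - x m else x m - x i)"
      by (cases "m \<in> S") (auto intro!: continuous_on_diff cont_coord)
  qed
  show "\<forall>m\<in>{i<..<j}. \<forall>x\<in>Tset n i j. (if m \<in> S then x i - x m else x m - x i) \<noteq> 0"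
    by (auto simp: Tset_def)
qed

lemma closure_Pcell:
  assumes "1 \<le> i" "i < j" "j \<le> n"
  shows "closure (Pcell n i j S) = Q n i j S"
proof
  have "Q n i j S = VA n \<inter> {x. x i = x j} \<inter> (\<Inter>k\<in>{i<..<j}\<inter>S. {x. x k \<le> x i}) \<inter> (\<Inter>k\<in>{i<..<j}-S. {x. x i \<le> x k})"
    by (auto simp: Q_def)
  moreover have "closed \<dots>" using closed_VA closed_le closed_eqc
    by (intro closed_Int closed_INT) auto
  ultimately show "closure (Pcell n i j S) \<subseteq> Q n i j S"
    by (intro closure_minimal) (auto simp: Pcell_def Q_def HA_def)
next
  show "Q n i j S \<subseteq> closure (Pcell n i j S)"
  proof
    fix y assume y: "y \<in> Q n i j S"
    let ?d = "center n (gS i j S)"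
    let ?g = "\<lambda>t::real. (\<lambda>m. y m + t * ?d m)"
    have "?g 0 \<in> closure (Pcell n i j S)"
    proof (rule closure_by_path)
      show "continuous_on UNIV ?g" by (rule cont_line)
      fix t :: real assume t: "t > 0"
      have dj: "?d i = ?d j" using assms by (subst center_eq) (auto simp: gS_def)
      have dk: "?d k - ?d i = gS i j S k" if "i < k" "k < j" for k
        using assms that by (subst center_diff) (auto simp: gS_def)
      have "\<forall>k. i < k \<and> k < j \<longrightarrow> (k \<in> S \<longrightarrow> ?g t k < ?g t i) \<and> (k \<notin> S \<longrightarrow> ?g t i < ?g t k)"
      proof (intro allI impI conjI)
        fix k assume k: "i < k \<and> k < j" "k \<in> S"
        then have "?d k - ?d i = -1" "y k \<le> y i" using dk y by (auto simp: gS_def Q_def)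
        moreover have "t * (?d k - ?d i) = t * (-1)" using \<open>?d k - ?d i = -1\<close> by simp
        ultimately show "?g t k < ?g t i" using t by (simp add: algebra_simps)
      next
        fix k assume k: "i < k \<and> k < j" "k \<notin> S"
        then have "?d k - ?d i = 1" "y i \<le> y k" using dk y by (auto simp: gS_def Q_def)
        moreover have "t * (?d k - ?d i) = t * 1" using \<open>?d k - ?d i = 1\<close> by simp
        ultimately show "?g t i < ?g t k" using t by (simp add: algebra_simps)
      qed
      then show "?g t \<in> Pcell n i j S" using y dj VA_lin[of y n ?d t] center_VA
        by (auto simp: Pcell_def HA_def Q_def)
    qed
    then show "y \<in> closure (Pcell n i j S)" by simp
  qed
qed

lemma shards_of_eq:
  assumes "1 \<le> i" "i < j" "j \<le> n"
  shows "shards_of n (HA n i j) = range (Q n i j)"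
proof -
  have "components (Tset n i j) = range (Pcell n i j)"
  proof
    show "range (Pcell n i j) \<subseteq> components (Tset n i j)" using Pcell_component[OF assms] by auto
    show "components (Tset n i j) \<subseteq> range (Pcell n i j)"
    proof
      fix C assume C: "C \<in> components (Tset n i j)"
      then obtain x where x: "x \<in> C" using in_components_nonempty by blast
      then have xT: "x \<in> Tset n i j" using C in_components_subset by blast
      let ?S = "{k. x k < x i}"
      have "x \<in> Pcell n i j ?S" using xT by (force simp: Pcell_def Tset_def)
      then have "C \<inter> Pcell n i j ?S \<noteq> {}" using x by blast
      then have "C = Pcell n i j ?S"
        using components_nonoverlap[OF C Pcell_component[OF assms]] by blast
      then show "C \<in> range (Pcell n i j)" by blast
    qed
  qed
  then show ?thesis unfolding shards_of_def T_eq[OF assms]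
    using closure_Pcell[OF assms] by (auto simp: image_image)
qed

lemma shardsA_eq: "shardsA n = {Q n i j S | i j S. 1 \<le> i \<and> i < j \<and> j \<le> n}"
  unfolding shardsA_def arrA_def using shards_of_eq by fastforce




definition coneR :: "nat \<Rightarrow> (nat \<times> nat) set \<Rightarrow> (nat \<Rightarrow> real) set" where
  "coneR n R = {x\<in>VA n. \<forall>(a,b)\<in>R. x a \<le> x b}"

definition goodR :: "nat \<Rightarrow> (nat \<times> nat) set \<Rightarrow> bool" where
  "goodR n R \<longleftrightarrow> R \<subseteq> {1..n} \<times> {1..n} \<and>
     (\<forall>(u,v)\<in>R. \<exists>i j. i < j \<and> (i,j) \<in> R \<and> (j,i) \<in> R \<and> (i = u \<or> i = v) \<and> u \<in> {i..j} \<and> v \<in> {i..j}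
        \<and> (\<forall>k. i < k \<and> k < j \<longrightarrow> (k,i) \<in> R \<or> (i,k) \<in> R))"

locale comb =
  fixes n :: nat and R :: "(nat \<times> nat) set"
  assumes good: "goodR n R"
begin

abbreviation le :: "nat \<Rightarrow> nat \<Rightarrow> bool" where "le a b \<equiv> (a,b) \<in> R\<^sup>*"
abbreviation eqv :: "nat \<Rightarrow> nat \<Rightarrow> bool" where "eqv a b \<equiv> le a b \<and> le b a"

lemma Rsub: "(a,b) \<in> R \<Longrightarrow> a \<in> {1..n} \<and> b \<in> {1..n}"
  using good by (auto simp: goodR_def)

lemma Rprop: "(u,v) \<in> R \<Longrightarrow> \<exists>i j. i < j \<and> (i,j) \<in> R \<and> (j,i) \<in> R \<and> (i = u \<or> i = v) \<and> u \<in> {i..j} \<and> v \<in> {i..j}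
        \<and> (\<forall>k. i < k \<and> k < j \<longrightarrow> (k,i) \<in> R \<or> (i,k) \<in> R)"
  using good unfolding goodR_def by blast

lemma le_range: "le a b \<Longrightarrow> a = b \<or> (a \<in> {1..n} \<and> b \<in> {1..n})"
  by (induction rule: rtrancl_induct) (auto dest: Rsub)

lemma le_trans: "le a b \<Longrightarrow> le b c \<Longrightarrow> le a c" by (rule rtrancl_trans)

lemma straddle:
  assumes "le a b"
  shows "a \<noteq> k \<longrightarrow> b \<noteq> k \<longrightarrow> (a < k) \<noteq> (b < k) \<longrightarrow> (le a k \<and> le k b) \<or>
    (\<exists>u v. le a u \<and> (u,v) \<in> R \<and> le v b \<and> u \<noteq> k \<and> v \<noteq> k \<and> (u < k) \<noteq> (v < k))"
  using assms
proof (induction rule: rtrancl_induct)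
  case base then show ?case by simp
next
  case (step c b)
  show ?case
  proof (intro impI)
    assume h: "a \<noteq> k" "b \<noteq> k" "(a < k) \<noteq> (b < k)"
    show "(le a k \<and> le k b) \<or> (\<exists>u v. le a u \<and> (u,v) \<in> R \<and> le v b \<and> u \<noteq> k \<and> v \<noteq> k \<and> (u < k) \<noteq> (v < k))"
    proof (cases "c = k")
      case True then show ?thesis using step by auto
    next
      case ck: False
      show ?thesis
      proof (cases "(a < k) = (c < k)")
        case True
        then show ?thesis using step h ck by (intro disjI2 exI[of _ c] exI[of _ b]) auto
      next
        case False
        then have "(le a k \<and> le k c) \<or> (\<exists>u v. le a u \<and> (u,v) \<in> R \<and> le v c \<and> u \<noteq> k \<and> v \<noteq> k \<and> (u < k) \<noteq> (v < k))"
          using step.IH h ck by auto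
        then show ?thesis
        proof
          assume "le a k \<and> le k c"
          then show ?thesis using step(2) by (meson rtrancl.rtrancl_into_rtrancl)
        next
          assume "\<exists>u v. le a u \<and> (u,v) \<in> R \<and> le v c \<and> u \<noteq> k \<and> v \<noteq> k \<and> (u < k) \<noteq> (v < k)"
          then obtain u v where "le a u" "(u,v) \<in> R" "le v c" "u \<noteq> k" "v \<noteq> k" "(u < k) \<noteq> (v < k)" by blast
          moreover have "le v b" using \<open>le v c\<close> step(2) by (meson rtrancl.rtrancl_into_rtrancl)
          ultimately show ?thesis by blast
        qed
      qed
    qed
  qed
qed

lemma F1:
  assumes "eqv a b" "a < k" "k < b" "\<not> eqv k a"
  shows "le k a \<or> le a k"
proof -
  have "(le a k \<and> le k b) \<or> (\<exists>u v. le a u \<and> (u,v) \<in> R \<and> le v b \<and> u \<noteq> k \<and> v \<noteq> k \<and> (u < k) \<noteq> (v < k))"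
    using straddle[OF conjunct1[OF assms(1)], of k] assms(2,3) by auto
  then show ?thesis
  proof
    assume "le a k \<and> le k b"
    then show ?thesis by blast
  next
    assume "\<exists>u v. le a u \<and> (u,v) \<in> R \<and> le v b \<and> u \<noteq> k \<and> v \<noteq> k \<and> (u < k) \<noteq> (v < k)"
    then obtain u v where uv: "le a u" "(u,v) \<in> R" "le v b" "u \<noteq> k" "v \<noteq> k" "(u < k) \<noteq> (v < k)" by blast
    have eu: "eqv u a" using uv assms(1) by (meson le_trans r_into_rtrancl)
    have ev: "eqv v a" using uv assms(1) by (meson le_trans r_into_rtrancl)
    obtain i j where ij: "i < j" "(i,j) \<in> R" "(j,i) \<in> R" "i = u \<or> i = v" "u \<in> {i..j}" "v \<in> {i..j}"
        "\<forall>k. i < k \<and> k < j \<longrightarrow> (k,i) \<in> R \<or> (i,k) \<in> R"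
      using Rprop[OF uv(2)] by blast
    have "i < k" "k < j" using ij(5,6) uv(4,5,6) by auto
    then have "(k,i) \<in> R \<or> (i,k) \<in> R" using ij(7) by blast
    moreover have "eqv i a" using ij(4) eu ev by blast
    ultimately show ?thesis by (meson le_trans r_into_rtrancl)
  qed
qed

lemma exit_edge:
  assumes "le a b"
  shows "P a \<longrightarrow> \<not> P b \<longrightarrow> (\<exists>u v. le a u \<and> (u,v) \<in> R \<and> le v b \<and> P u \<and> \<not> P v)"
  using assms
proof (induction rule: rtrancl_induct)
  case base then show ?case by simp
next
  case (step c b)
  show ?case
  proof (intro impI)
    assume h: "P a" "\<not> P b"
    show "\<exists>u v. le a u \<and> (u,v) \<in> R \<and> le v b \<and> P u \<and> \<not> P v"
    proof (cases "P c")
      case True then show ?thesis using step h by blast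
    next
      case False
      then obtain u v where "le a u" "(u,v) \<in> R" "le v c" "P u" "\<not> P v" using step.IH h by blast
      moreover have "le v b" using \<open>le v c\<close> step(2) by (meson rtrancl.rtrancl_into_rtrancl)
      ultimately show ?thesis by blast
    qed
  qed
qed

definition ordered :: "nat list \<Rightarrow> bool" where
  "ordered L \<longleftrightarrow> (\<forall>p q. p < length L \<and> q < length L \<and> le (L!p) (L!q) \<and> \<not> le (L!q) (L!p) \<longrightarrow> p < q)"
definition decr :: "nat list \<Rightarrow> bool" where
  "decr L \<longleftrightarrow> (\<forall>p q. p < q \<and> q < length L \<and> eqv (L!p) (L!q) \<longrightarrow> L!q < L!p)"
definition contig :: "nat list \<Rightarrow> bool" where
  "contig L \<longleftrightarrow> (\<forall>p r q. p < r \<and> r < q \<and> q < length L \<and> eqv (L!p) (L!q) \<longrightarrow> eqv (L!r) (L!p))"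
definition bound :: "nat list \<Rightarrow> bool" where
  "bound L \<longleftrightarrow> (\<forall>p. Suc p < length L \<and> \<not> eqv (L!p) (L!Suc p) \<longrightarrow> L!p < L!Suc p)"
definition headp :: "nat set \<Rightarrow> nat \<Rightarrow> bool" where
  "headp U h \<longleftrightarrow> (\<forall>a\<in>U. le a h \<longrightarrow> le h a) \<and> (\<forall>a\<in>U. eqv a h \<longrightarrow> a \<le> h)"

end



context comb begin

lemma rev_sorted_props:
  assumes "finite B"
  defines "A \<equiv> rev (sorted_list_of_set B)"
  shows "distinct A" "set A = B" "\<And>p q. p < q \<Longrightarrow> q < length A \<Longrightarrow> A!q < A!p" "length A = card B"
proof -
  show "distinct A" "set A = B" "length A = card B" using assms by auto
  have s: "sorted_wrt (<) (sorted_list_of_set B)" by simp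
  fix p q assume pq: "p < q" "q < length A"
  let ?S = "sorted_list_of_set B"
  have l: "length A = length ?S" by (simp add: A_def)
  have "A!p = ?S ! (length ?S - Suc p)" "A!q = ?S ! (length ?S - Suc q)"
    using pq l by (auto simp: A_def rev_nth)
  moreover have "?S ! (length ?S - Suc q) < ?S ! (length ?S - Suc p)"
    using s pq l by (auto simp: sorted_wrt_iff_nth_less)
  ultimately show "A!q < A!p" by simp
qed

lemma LC:
  assumes "finite U" "U \<subseteq> {1..n}" "\<forall>a\<in>U. \<forall>b. le a b \<longrightarrow> b \<in> U"
  shows "\<exists>L. distinct L \<and> set L = U \<and> ordered L \<and> decr L \<and> contig L \<and> bound L \<and> (L \<noteq> [] \<longrightarrow> headp U (hd L))"
  using assms
proof (induction "card U" arbitrary: U rule: less_induct)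
  case less
  show ?case
  proof (cases "U = {}")
    case True then show ?thesis
      by (intro exI[of _ "[]"]) (auto simp: ordered_def decr_def contig_def bound_def)
  next
    case Une: False
    have up: "\<And>a b. a \<in> U \<Longrightarrow> le a b \<Longrightarrow> b \<in> U" using less.prems(3) by blast
    let ?M = "{a\<in>U. \<forall>b\<in>U. le b a \<longrightarrow> le a b}"
    obtain a0 where a0: "a0 \<in> U" using Une by blast
    obtain a where a: "a \<in> U" "\<forall>y. y \<in> U \<longrightarrow> card {b\<in>U. le b a} \<le> card {b\<in>U. le b y}"
      using ex_has_least_nat[of "\<lambda>a. a \<in> U" a0 "\<lambda>a. card {b\<in>U. le b a}"] a0 by blast
    have "a \<in> ?M"
    proof (rule ccontr)
      assume "a \<notin> ?M"
      then obtain b where b: "b \<in> U" "le b a" "\<not> le a b" using a by blast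
      have "{c\<in>U. le c b} \<subset> {c\<in>U. le c a}"
        using b a(1) by (auto intro: le_trans)
      then have "card {c\<in>U. le c b} < card {c\<in>U. le c a}"
        using less.prems(1) by (intro psubset_card_mono) auto
      then show False using a(2) b(1) by fastforce
    qed
    then have Mne: "?M \<noteq> {}" by blast
    have Mfin: "finite ?M" using less.prems(1) by auto
    define e0 where "e0 = Min ?M"
    have e0M: "e0 \<in> ?M" unfolding e0_def using Mfin Mne by (rule Min_in)
    have e0le: "\<And>x. x \<in> ?M \<Longrightarrow> e0 \<le> x" unfolding e0_def using Mfin by simp
    define B0 where "B0 = {a\<in>U. eqv a e0}"
    have B0M: "B0 \<subseteq> ?M"
    proof
      fix x assume x: "x \<in> B0"
      have "\<forall>b\<in>U. le b x \<longrightarrow> le x b"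
      proof (intro ballI impI)
        fix b assume "b \<in> U" "le b x"
        then have "le b e0" using x by (auto simp: B0_def intro: le_trans)
        then have "le e0 b" using e0M \<open>b \<in> U\<close> by blast
        then show "le x b" using x by (auto simp: B0_def intro: le_trans)
      qed
      then show "x \<in> ?M" using x by (auto simp: B0_def)
    qed
    have e0B: "e0 \<in> B0" using e0M by (auto simp: B0_def)
    have B0le: "\<And>x. x \<in> B0 \<Longrightarrow> e0 \<le> x" using B0M e0le by blast
    have B0fin: "finite B0" using less.prems(1) by (auto simp: B0_def)
    have B0U: "B0 \<subseteq> U" by (auto simp: B0_def)
    define U' where "U' = U - B0"
    have cardU': "card U' < card U" unfolding U'_def
      by (rule psubset_card_mono) (use less.prems(1) e0B B0U in auto)
    have U'up: "\<forall>a\<in>U'. \<forall>b. le a b \<longrightarrow> b \<in> U'"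
    proof (intro ballI allI impI)
      fix x b assume x: "x \<in> U'" "le x b"
      then have bU: "b \<in> U" using up unfolding U'_def by blast
      show "b \<in> U'"
      proof (rule ccontr)
        assume "b \<notin> U'"
        then have "eqv b e0" using bU by (auto simp: U'_def B0_def)
        then have "le x e0" using x by (auto intro: le_trans)
        then have "le e0 x" using e0M x by (auto simp: U'_def)
        then have "x \<in> B0" using x \<open>le x e0\<close> by (auto simp: U'_def B0_def)
        then show False using x by (auto simp: U'_def)
      qed
    qed
    have U'fin: "finite U'" and U'sub: "U' \<subseteq> {1..n}" using less.prems(1,2) by (auto simp: U'_def)
    obtain L' where L': "distinct L'" "set L' = U'" "ordered L'" "decr L'" "contig L'" "bound L'"
        "L' \<noteq> [] \<longrightarrow> headp U' (hd L')"
      using less.hyps[OF cardU' U'fin U'sub U'up] by blast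
    define A where "A = rev (sorted_list_of_set B0)"
    note As = rev_sorted_props[OF B0fin, folded A_def]
    define m where "m = length A"
    define L where "L = A @ L'"
    have Lnth: "\<And>p. L!p = (if p < m then A!p else L'!(p - m))"
      by (simp add: L_def m_def nth_append)
    have lenL: "length L = m + length L'" by (simp add: L_def m_def)
    have inA: "\<And>p. p < m \<Longrightarrow> A!p \<in> B0" using As(2) by (auto simp: m_def)
    have inL': "\<And>p. p < length L' \<Longrightarrow> L'!p \<in> U'" using L'(2) by auto
    have B0eqv: "\<And>x y. x \<in> B0 \<Longrightarrow> y \<in> B0 \<Longrightarrow> eqv x y" by (auto simp: B0_def intro: le_trans)
    have U'notB0: "\<And>x y. x \<in> U' \<Longrightarrow> y \<in> B0 \<Longrightarrow> \<not> eqv x y"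
      by (auto simp: U'_def B0_def intro: le_trans)
    have U'U: "U' \<subseteq> U" by (auto simp: U'_def)
    have mpos: "m > 0" using As(2) e0B by (auto simp: m_def)
    have lastA: "A!(m - 1) = e0"
    proof -
      obtain p where p: "p < m" "A!p = e0" using e0B As(2) by (auto simp: m_def in_set_conv_nth)
      have "A!(m-1) \<in> B0" using inA mpos by simp
      then have "e0 \<le> A!(m-1)" by (rule B0le)
      moreover have "p < m - 1 \<Longrightarrow> A!(m-1) < A!p" using As(3)[of p "m-1"] mpos by (simp add: m_def)
      ultimately have "\<not> p < m - 1" using p by auto
      then have "p = m - 1" using p by auto
      then show ?thesis using p by simp
    qed
    have MB: "Max B0 \<in> B0" using B0fin e0B by (intro Max_in) auto
    have hdA: "hd A = Max B0"
    proof -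
      obtain p where p: "p < m" "A!p = Max B0" using MB As(2) by (auto simp: m_def in_set_conv_nth)
      have "A!0 \<in> B0" using inA mpos by simp
      then have "A!0 \<le> Max B0" using B0fin by simp
      moreover have "0 < p \<Longrightarrow> A!p < A!0" using As(3)[of 0 p] p by (simp add: m_def)
      ultimately have "p = 0" using p by (metis leD neq0_conv)
      moreover have "A \<noteq> []" using mpos by (auto simp: m_def)
      ultimately show ?thesis using p by (simp add: hd_conv_nth)
    qed
    show ?thesis
    proof (intro exI[of _ L] conjI impI)
      show "distinct L" using As(1) L'(1) L'(2) As(2) by (auto simp: L_def U'_def)
      show "set L = U" using As(2) L'(2) B0U by (auto simp: L_def U'_def)
      show "ordered L" unfolding ordered_def
      proof (intro allI impI)
        fix p q assume h: "p < length L \<and> q < length L \<and> le (L!p) (L!q) \<and> \<not> le (L!q) (L!p)"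
        show "p < q"
        proof (cases "p < m")
          case True
          show ?thesis
          proof (rule ccontr)
            assume "\<not> p < q"
            then have "q < m" using True by simp
            then have "L!p \<in> B0" "L!q \<in> B0" using True by (simp_all add: Lnth inA)
            then show False using h B0eqv by blast
          qed
        next
          case pm: False
          show ?thesis
          proof (cases "q < m")
            case True
            then have "L!q \<in> ?M" using inA B0M Lnth by auto
            moreover have "L!p \<in> U" using pm h inL' U'U Lnth lenL by auto
            ultimately show ?thesis using h by blast
          next
            case False
            have "p - m < length L'" "q - m < length L'" using h pm False lenL by auto
            moreover have "L!p = L'!(p-m)" "L!q = L'!(q-m)" using pm False Lnth by auto
            ultimately have "p - m < q - m" using L'(3) h unfolding ordered_def by auto
            then show ?thesis by simp
          qed
        qed
      qed
      show "decr L" unfolding decr_def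
      proof (intro allI impI)
        fix p q assume h: "p < q \<and> q < length L \<and> eqv (L!p) (L!q)"
        show "L!q < L!p"
        proof (cases "q < m")
          case True then show ?thesis using h As(3) Lnth by (auto simp: m_def)
        next
          case qm: False
          show ?thesis
          proof (cases "p < m")
            case True
            then have "L!p \<in> B0" using inA Lnth by auto
            moreover have "L!q \<in> U'" using qm h inL' Lnth lenL by auto
            ultimately show ?thesis using U'notB0 h by blast
          next
            case False
            have "p - m < q - m" "q - m < length L'" using h qm False lenL by auto
            moreover have "L!p = L'!(p-m)" "L!q = L'!(q-m)" using qm False Lnth by auto
            ultimately show ?thesis using L'(4) h unfolding decr_def by auto
          qed
        qed
      qed
      show "contig L" unfolding contig_def
      proof (intro allI impI)
        fix p r q assume h: "p < r \<and> r < q \<and> q < length L \<and> eqv (L!p) (L!q)"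
        show "eqv (L!r) (L!p)"
        proof (cases "p < m")
          case True
          then have pB: "L!p \<in> B0" using inA Lnth by auto
          have "q < m"
          proof (rule ccontr)
            assume "\<not> q < m"
            then have "q - m < length L'" using h lenL by auto
            then have "L!q \<in> U'" using inL' Lnth \<open>\<not> q < m\<close> by auto
            then show False using U'notB0 pB h by blast
          qed
          then have "L!r \<in> B0" using h inA Lnth by auto
          then show ?thesis using pB B0eqv by blast
        next
          case False
          have "p - m < r - m" "r - m < q - m" "q - m < length L'" using h False lenL by auto
          moreover have "L!p = L'!(p-m)" "L!q = L'!(q-m)" "L!r = L'!(r-m)" using h False Lnth by auto
          ultimately show ?thesis using L'(5)[unfolded contig_def, rule_format, of "p-m" "r-m" "q-m"] h by simp
        qed
      qed
      show "bound L" unfolding bound_def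
      proof (intro allI impI)
        fix p assume h: "Suc p < length L \<and> \<not> eqv (L!p) (L!Suc p)"
        show "L!p < L!Suc p"
        proof (cases "Suc p < m")
          case True
          then have "L!p \<in> B0" "L!Suc p \<in> B0" by (simp_all add: Lnth inA)
          then show ?thesis using h B0eqv by blast
        next
          case F1: False
          show ?thesis
          proof (cases "p < m")
            case False
            have "Suc (p - m) < length L'" using h False lenL by auto
            moreover have "L!p = L'!(p-m)" "L!Suc p = L'!(Suc (p-m))" using False Lnth by (auto simp: Suc_diff_le)
            ultimately show ?thesis using L'(6)[unfolded bound_def, rule_format, of "p-m"] h by simp
          next
            case True
            then have pm: "p = m - 1" "Suc p = m" using F1 by auto
            have Lp: "L!p = e0" using pm lastA Lnth True by simp
            have L'ne: "L' \<noteq> []" using h pm lenL by auto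
            define h0 where "h0 = hd L'"
            have Lsp: "L!Suc p = h0" using pm Lnth L'ne by (simp add: h0_def hd_conv_nth)
            have hp: "headp U' h0" using L'(7) L'ne by (simp add: h0_def)
            have h0U': "h0 \<in> U'" using L'ne L'(2) hd_in_set[OF L'ne] by (simp add: h0_def)
            have "e0 < h0"
            proof (cases "\<forall>a\<in>U. le a h0 \<longrightarrow> le h0 a")
              case True
              then have "h0 \<in> ?M" using h0U' U'U by auto
              then have "e0 \<le> h0" by (rule e0le)
              moreover have "h0 \<noteq> e0" using h0U' e0B by (auto simp: U'_def)
              ultimately show ?thesis by simp
            next
              case False
              then obtain a where a: "a \<in> U" "le a h0" "\<not> le h0 a" by blast
              have "a \<notin> U'" using a hp unfolding headp_def by blast
              then have aB: "a \<in> B0" using a by (auto simp: U'_def)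
              have "\<not> eqv h0 e0" using h0U' e0B U'notB0 by blast
              then obtain u v where uv: "le a u" "(u,v) \<in> R" "le v h0" "eqv u e0" "\<not> eqv v e0"
                using exit_edge[OF a(2), of "\<lambda>x. eqv x e0"] aB by (auto simp: B0_def)
              have uU: "u \<in> U" using uv(1) a(1) up by blast
              have uB: "u \<in> B0" using uU uv(4) by (auto simp: B0_def)
              have e0u: "e0 \<le> u" using B0le uB by blast
              have vU: "v \<in> U" using uU uv(2) up by blast
              have vU': "v \<in> U'" using vU uv(5) by (auto simp: U'_def B0_def)
              have "le h0 v" using hp vU' uv(3) unfolding headp_def by blast
              then have vh: "v \<le> h0" using hp vU' uv(3) unfolding headp_def by blast
              obtain i j where ij: "i < j" "(i,j) \<in> R" "(j,i) \<in> R" "i = u \<or> i = v" "u \<in> {i..j}" "v \<in> {i..j}"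
                using Rprop[OF uv(2)] by blast
              have eij: "eqv i j" using ij(2,3) by blast
              show ?thesis
              proof (cases "i = u")
                case True
                have "v \<noteq> u" using uv(4,5) by blast
                moreover have "v \<noteq> j" using True eij uv(4,5) by (meson le_trans)
                ultimately have "u < v" using ij(5,6) True by auto
                then show ?thesis using e0u vh by simp
              next
                case False
                then have iv: "i = v" using ij(4) by blast
                have jU: "j \<in> U" using vU iv ij(2) up by blast
                have "\<not> eqv j e0" using iv eij uv(5) by (meson le_trans)
                then have jU': "j \<in> U'" using jU by (auto simp: U'_def B0_def)
                have "le j h0" using iv ij(3) uv(3) by (meson le_trans r_into_rtrancl)
                moreover have "le h0 j" using hp jU' \<open>le j h0\<close> unfolding headp_def by blast
                ultimately have jh: "j \<le> h0" using hp jU' unfolding headp_def by blast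
                have "u \<noteq> j" using \<open>\<not> eqv j e0\<close> uv(4) by blast
                then have "u < j" using ij(5) by auto
                then show ?thesis using e0u jh by simp
              qed
            qed
            then show ?thesis using Lp Lsp by simp
          qed
        qed
      qed
      assume "L \<noteq> []"
      have hdL: "hd L = Max B0" using hdA mpos by (simp add: L_def m_def)
      show "headp U (hd L)" unfolding headp_def hdL
      proof (intro conjI ballI impI)
        fix x assume "x \<in> U" "le x (Max B0)"
        then show "le (Max B0) x" using MB B0M by blast
      next
        fix x assume x: "x \<in> U" "eqv x (Max B0)"
        then have "x \<in> B0" using MB by (auto simp: B0_def intro: le_trans)
        then show "x \<le> Max B0" using B0fin by simp
      qed
    qed
  qed
qed

end



context comb begin

lemma cone_le: "x \<in> coneR n R \<Longrightarrow> le a b \<Longrightarrow> x a \<le> x b"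
proof -
  assume x: "x \<in> coneR n R" and ab: "le a b"
  from ab show "x a \<le> x b"
  proof (induction rule: rtrancl_induct)
    case base then show ?case by simp
  next
    case (step c d)
    then have "x c \<le> x d" using x by (auto simp: coneR_def)
    then show ?case using step by simp
  qed
qed

definition cls :: "nat \<Rightarrow> nat set" where "cls c = {j\<in>{1..n}. eqv c j}"

lemma exists_w: "\<exists>w. w permutes {1..n} \<and> coneC n w = coneR n R"
proof -
  have up: "\<forall>a\<in>{1..n}. \<forall>b. le a b \<longrightarrow> b \<in> {1..n}" using le_range by blast
  obtain L where L: "distinct L" "set L = {1..n}" "ordered L" "decr L" "contig L" "bound L"
    using LC[OF _ _ up] by auto
  have lenL: "length L = n" using L(1,2) distinct_card by fastforce
  define w where "w r = (if r \<in> {1..n} then L!(r-1) else r)" for r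
  have wL: "\<And>r. r \<in> {1..n} \<Longrightarrow> w r = L!(r-1)" by (simp add: w_def)
  have inj: "inj_on w {1..n}"
  proof
    fix r s assume rs: "r \<in> {1..n}" "s \<in> {1..n}" "w r = w s"
    then have "L!(r-1) = L!(s-1)" by (simp add: wL)
    then have "r - 1 = s - 1" using nth_eq_iff_index_eq[OF L(1)] rs lenL by auto
    then show "r = s" using rs by auto
  qed
  have img: "w ` {1..n} = {1..n}"
  proof
    show "w ` {1..n} \<subseteq> {1..n}"
    proof
      fix y assume "y \<in> w ` {1..n}"
      then obtain r where r: "r \<in> {1..n}" "y = w r" by blast
      then have "y = L!(r-1)" by (simp add: wL)
      then have "y \<in> set L" using r lenL by auto
      then show "y \<in> {1..n}" using L(2) by simp
    qed
    show "{1..n} \<subseteq> w ` {1..n}"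
    proof
      fix y assume "y \<in> {1..n}"
      then obtain p where p: "p < length L" "L!p = y" using L(2) by (metis in_set_conv_nth)
      then have "Suc p \<in> {1..n}" "w (Suc p) = y" using lenL by (auto simp: wL)
      then show "y \<in> w ` {1..n}" by blast
    qed
  qed
  have perm: "w permutes {1..n}"
    by (rule bij_imp_permutes) (use inj img in \<open>auto simp: bij_betw_def w_def\<close>)
  have wS: "\<And>r. r \<in> {1..n} \<Longrightarrow> w r \<in> {1..n}" using img by blast
  have invS: "\<And>k. k \<in> {1..n} \<Longrightarrow> inv w k \<in> {1..n}"
    using permutes_in_image[OF permutes_inv[OF perm]] by blast
  have winv: "\<And>k. w (inv w k) = k" using permutes_inverses(1)[OF perm] by blast
  have W_ord: "\<And>r s. r \<in> {1..n} \<Longrightarrow> s \<in> {1..n} \<Longrightarrow> le (w r) (w s) \<Longrightarrow> \<not> le (w s) (w r) \<Longrightarrow> r < s"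
  proof -
    fix r s assume h: "r \<in> {1..n}" "s \<in> {1..n}" "le (w r) (w s)" "\<not> le (w s) (w r)"
    have "r - 1 < length L" "s - 1 < length L" "w r = L!(r-1)" "w s = L!(s-1)" using h lenL by (auto simp: wL)
    then have "r - 1 < s - 1"
      using L(3)[unfolded ordered_def, rule_format, of "r-1" "s-1"] h by simp
    then show "r < s" by simp
  qed
  have W_decr: "\<And>r s. 1 \<le> r \<Longrightarrow> r < s \<Longrightarrow> s \<le> n \<Longrightarrow> eqv (w r) (w s) \<Longrightarrow> w s < w r"
  proof -
    fix r s assume h: "1 \<le> r" "r < s" "s \<le> n" "eqv (w r) (w s)"
    have "w r = L!(r-1)" "w s = L!(s-1)" using h by (auto simp: wL)
    moreover have "r - 1 < s - 1" "s - 1 < length L" using h lenL by auto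
    ultimately show "w s < w r"
      using L(4)[unfolded decr_def, rule_format, of "r-1" "s-1"] h by simp
  qed
  have W_contig: "\<And>r t s. 1 \<le> r \<Longrightarrow> r < t \<Longrightarrow> t < s \<Longrightarrow> s \<le> n \<Longrightarrow> eqv (w r) (w s) \<Longrightarrow> eqv (w t) (w r)"
  proof -
    fix r t s assume h: "1 \<le> r" "r < t" "t < s" "s \<le> n" "eqv (w r) (w s)"
    have "w r = L!(r-1)" "w s = L!(s-1)" "w t = L!(t-1)" using h by (auto simp: wL)
    moreover have "r - 1 < t - 1" "t - 1 < s - 1" "s - 1 < length L" using h lenL by auto
    ultimately show "eqv (w t) (w r)"
      using L(5)[unfolded contig_def, rule_format, of "r-1" "t-1" "s-1"] h by simp
  qed
  have W_bound: "\<And>r. 1 \<le> r \<Longrightarrow> r < n \<Longrightarrow> \<not> eqv (w r) (w (Suc r)) \<Longrightarrow> w r < w (Suc r)"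
  proof -
    fix r assume h: "1 \<le> r" "r < n" "\<not> eqv (w r) (w (Suc r))"
    have "w r = L!(r-1)" "w (Suc r) = L!(Suc (r-1))" using h by (auto simp: wL)
    moreover have "Suc (r - 1) < length L" using h lenL by auto
    ultimately show "w r < w (Suc r)"
      using L(6)[unfolded bound_def, rule_format, of "r-1"] h by simp
  qed
  have W_ord_inv: "\<And>i k. i \<in> {1..n} \<Longrightarrow> k \<in> {1..n} \<Longrightarrow> le i k \<Longrightarrow> \<not> le k i \<Longrightarrow> inv w i < inv w k"
    using W_ord invS winv by metis
  have BK1: "\<exists>c\<in>{1..n}. Bk = cls c" if Bk: "Bk \<in> blocks n w" for Bk
  proof -
    obtain a b where ab: "Bk = w ` {a..b}" "1 \<le> a" "a \<le> b" "b \<le> n"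
      "\<forall>r. a \<le> r \<and> r < b \<longrightarrow> w r > w (Suc r)" "a = 1 \<or> w (a - 1) < w a" "b = n \<or> w b < w (Suc b)"
      using Bk unfolding blocks_def by blast
    have chain: "a + d \<le> b \<longrightarrow> eqv (w a) (w (a + d))" for d
    proof (induction d)
      case 0 then show ?case by simp
    next
      case (Suc d)
      show ?case
      proof
        assume "a + Suc d \<le> b"
        then have "eqv (w a) (w (a + d))" using Suc by simp
        moreover have "eqv (w (a + d)) (w (Suc (a + d)))"
        proof (rule ccontr)
          assume "\<not> eqv (w (a + d)) (w (Suc (a + d)))"
          then have "w (a + d) < w (Suc (a + d))" using W_bound[of "a + d"] \<open>a + Suc d \<le> b\<close> ab by simp
          moreover have "w (a + d) > w (Suc (a + d))" using ab(5) \<open>a + Suc d \<le> b\<close> by simp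
          ultimately show False by simp
        qed
        ultimately show "eqv (w a) (w (a + Suc d))" by (auto intro: le_trans)
      qed
    qed
    have ch: "\<And>r. a \<le> r \<Longrightarrow> r \<le> b \<Longrightarrow> eqv (w a) (w r)"
      using chain by (metis le_add_diff_inverse)
    have aS: "a \<in> {1..n}" using ab by simp
    have "Bk = cls (w a)"
    proof
      show "Bk \<subseteq> cls (w a)" using ab ch wS by (auto simp: cls_def)
      show "cls (w a) \<subseteq> Bk"
      proof
        fix j assume j: "j \<in> cls (w a)"
        then have jS: "j \<in> {1..n}" and ej: "eqv (w a) j" by (auto simp: cls_def)
        define s where "s = inv w j"
        have sS: "s \<in> {1..n}" and ws: "w s = j" using invS[OF jS] winv by (auto simp: s_def)
        have "\<not> s < a"
        proof
          assume sa: "s < a"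
          then have a1: "a \<noteq> 1" "1 \<le> a - 1" using sS by auto
          have "eqv (w (a - 1)) (w a)"
          proof (cases "s = a - 1")
            case True then show ?thesis using ws ej by simp
          next
            case False
            then have "eqv (w (a-1)) (w s)" using W_contig[of s "a-1" a] sS sa ab ws ej by auto
            then show ?thesis using ws ej by (auto intro: le_trans)
          qed
          then have "w a < w (a - 1)" using W_decr[of "a-1" a] a1 ab by simp
          then show False using ab(6) a1 by simp
        qed
        moreover have "\<not> b < s"
        proof
          assume bs: "b < s"
          then have bn: "b \<noteq> n" using sS by auto
          have ebw: "eqv (w a) (w b)" using ch ab by simp
          have "eqv (w (Suc b)) (w b)"
          proof (cases "s = Suc b")
            case True then show ?thesis using ws ej ebw by (auto intro: le_trans)
          next
            case False
            then show ?thesis using W_contig[of b "Suc b" s] sS bs ab ws ej ebw by (auto intro: le_trans)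
          qed
          then have "w (Suc b) < w b" using W_decr[of b "Suc b"] ab bs sS by auto
          then show False using ab(7) bn by simp
        qed
        ultimately show "j \<in> Bk" using ab(1) ws by auto
      qed
    qed
    then show ?thesis using aS wS by blast
  qed
  have BK2: "cls c \<in> blocks n w" if c: "c \<in> {1..n}" for c
  proof -
    define SS where "SS = {r\<in>{1..n}. eqv (w r) c}"
    have fin: "finite SS" by (simp add: SS_def)
    have icS: "inv w c \<in> SS" using invS[OF c] winv by (auto simp: SS_def)
    then have ne: "SS \<noteq> {}" by blast
    define a where "a = Min SS"
    define b where "b = Max SS"
    have aS: "a \<in> SS" unfolding a_def using fin ne by (rule Min_in)
    have bS: "b \<in> SS" unfolding b_def using fin ne by (rule Max_in)
    have amin: "\<And>r. r \<in> SS \<Longrightarrow> a \<le> r" unfolding a_def using fin by simp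
    have bmax: "\<And>r. r \<in> SS \<Longrightarrow> r \<le> b" unfolding b_def using fin by simp
    have ab: "1 \<le> a" "a \<le> b" "b \<le> n" using aS bS amin by (auto simp: SS_def)
    have allS: "\<And>t. a \<le> t \<Longrightarrow> t \<le> b \<Longrightarrow> t \<in> SS"
    proof -
      fix t assume t: "a \<le> t" "t \<le> b"
      show "t \<in> SS"
      proof (cases "t = a \<or> t = b")
        case True then show ?thesis using aS bS by auto
      next
        case False
        then have "a < t" "t < b" using t by auto
        moreover have "eqv (w a) (w b)" using aS bS by (auto simp: SS_def intro: le_trans)
        ultimately have "eqv (w t) (w a)" using W_contig[of a t b] ab by simp
        then show ?thesis using aS t ab by (auto simp: SS_def intro: le_trans)
      qed
    qed
    have eq: "cls c = w ` {a..b}"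
    proof
      show "cls c \<subseteq> w ` {a..b}"
      proof
        fix j assume j: "j \<in> cls c"
        then have jS: "j \<in> {1..n}" and ej: "eqv c j" by (auto simp: cls_def)
        have "inv w j \<in> SS" using invS[OF jS] winv ej by (auto simp: SS_def)
        then have "inv w j \<in> {a..b}" using amin bmax by auto
        then show "j \<in> w ` {a..b}" using winv by (metis image_eqI)
      qed
      show "w ` {a..b} \<subseteq> cls c"
      proof
        fix j assume "j \<in> w ` {a..b}"
        then obtain t where t: "t \<in> {a..b}" "j = w t" by blast
        then have "t \<in> SS" using allS by auto
        then show "j \<in> cls c" using t wS by (auto simp: SS_def cls_def)
      qed
    qed
    have desc: "\<forall>r. a \<le> r \<and> r < b \<longrightarrow> w r > w (Suc r)"
    proof (intro allI impI)
      fix r assume r: "a \<le> r \<and> r < b"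
      then have "r \<in> SS" "Suc r \<in> SS" using allS by auto
      then have "eqv (w r) (w (Suc r))" by (auto simp: SS_def intro: le_trans)
      then show "w r > w (Suc r)" using W_decr[of r "Suc r"] r ab by simp
    qed
    have ba0: "w (a - 1) < w a" if a1: "a \<noteq> 1"
    proof -
      from a1 have "a - 1 \<notin> SS" using amin ab by fastforce
      then have "\<not> eqv (w (a - 1)) c" using a1 ab by (auto simp: SS_def)
      then have "\<not> eqv (w (a - 1)) (w a)" using aS by (auto simp: SS_def intro: le_trans)
      then show "w (a - 1) < w a" using W_bound[of "a - 1"] a1 ab by simp
    qed
    have bb0: "w b < w (Suc b)" if bn: "b \<noteq> n"
    proof -
      from bn have "Suc b \<notin> SS" using bmax by fastforce
      then have "\<not> eqv (w (Suc b)) c" using bn ab by (auto simp: SS_def)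
      then have "\<not> eqv (w b) (w (Suc b))" using bS by (auto simp: SS_def intro: le_trans)
      then show "w b < w (Suc b)" using W_bound[of b] bn ab by simp
    qed
    have ba: "a = 1 \<or> w (a - 1) < w a" using ba0 by blast
    have bb: "b = n \<or> w b < w (Suc b)" using bb0 by blast
    show ?thesis unfolding blocks_def eq using ab desc ba bb by blast
  qed
  have blk: "blocks n w = cls ` {1..n}" using BK1 BK2 by blast
  have clsS: "\<And>c i. i \<in> cls c \<Longrightarrow> i \<in> {1..n}" by (auto simp: cls_def)
  have clsE: "\<And>c i j. i \<in> cls c \<Longrightarrow> j \<in> cls c \<Longrightarrow> eqv i j" by (auto simp: cls_def intro: le_trans)
  have "coneC n w = coneR n R"
  proof
    show "coneR n R \<subseteq> coneC n w"
    proof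
      fix x assume x: "x \<in> coneR n R"
      have xV: "x \<in> VA n" using x by (simp add: coneR_def)
      have E: "\<forall>Bk \<in> blocks n w. \<forall>i \<in> Bk. \<forall>j \<in> Bk. x i = x j"
        unfolding blk using clsE cone_le[OF x] by (metis antisym imageE)
      have I: "\<forall>Bk \<in> blocks n w. \<forall>i \<in> Bk. \<forall>j \<in> Bk. \<forall>k. i < k \<and> k < j \<and> k \<notin> Bk \<longrightarrow>
          (inv w k < inv w i \<longrightarrow> x k \<le> x i) \<and> (inv w i < inv w k \<longrightarrow> x i \<le> x k)"
      proof (intro ballI allI impI)
        fix Bk i j k assume Bk: "Bk \<in> blocks n w" and ij: "i \<in> Bk" "j \<in> Bk" and k: "i < k \<and> k < j \<and> k \<notin> Bk"
        obtain c where c: "c \<in> {1..n}" "Bk = cls c" using Bk blk by blast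
        have iS: "i \<in> {1..n}" "j \<in> {1..n}" using ij c clsS by auto
        then have kS: "k \<in> {1..n}" using k by auto
        have eij: "eqv i j" using ij c clsE by blast
        have "\<not> eqv k i"
        proof
          assume "eqv k i"
          then have "eqv c k" using ij c by (auto simp: cls_def intro: le_trans)
          then show False using k kS c by (auto simp: cls_def)
        qed
        then have ki: "le k i \<or> le i k" using F1[OF eij] k by blast
        show "(inv w k < inv w i \<longrightarrow> x k \<le> x i) \<and> (inv w i < inv w k \<longrightarrow> x i \<le> x k)"
        proof (intro conjI)
        show "inv w k < inv w i \<longrightarrow> x k \<le> x i"
        proof
          assume inv: "inv w k < inv w i"
          show "x k \<le> x i"
          proof (cases "le k i")
            case True then show ?thesis using cone_le[OF x] by blast
          next
            case False
            then have "inv w i < inv w k" using W_ord_inv[OF iS(1) kS] ki by blast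
            then show ?thesis using inv by simp
          qed
        qed
        show "inv w i < inv w k \<longrightarrow> x i \<le> x k"
        proof
          assume inv: "inv w i < inv w k"
          show "x i \<le> x k"
          proof (cases "le i k")
            case True then show ?thesis using cone_le[OF x] by blast
          next
            case False
            then have "inv w k < inv w i" using W_ord_inv[OF kS iS(1)] ki by blast
            then show ?thesis using inv by simp
          qed
        qed
        qed
      qed
      show "x \<in> coneC n w" unfolding coneC_def using xV E I by blast
    qed
    show "coneC n w \<subseteq> coneR n R"
    proof
      fix x assume x: "x \<in> coneC n w"
      have xV: "x \<in> VA n" and E: "\<forall>Bk \<in> blocks n w. \<forall>i \<in> Bk. \<forall>j \<in> Bk. x i = x j"
        and I: "\<forall>Bk \<in> blocks n w. \<forall>i \<in> Bk. \<forall>j \<in> Bk. \<forall>k. i < k \<and> k < j \<and> k \<notin> Bk \<longrightarrow>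
          (inv w k < inv w i \<longrightarrow> x k \<le> x i) \<and> (inv w i < inv w k \<longrightarrow> x i \<le> x k)"
        using x unfolding coneC_def by blast+
      have "x a \<le> x b" if ab: "(a,b) \<in> R" for a b
      proof -
        have abS: "a \<in> {1..n}" "b \<in> {1..n}" using Rsub[OF ab] by auto
        obtain i j where ij: "i < j" "(i,j) \<in> R" "(j,i) \<in> R" "i = a \<or> i = b" "a \<in> {i..j}" "b \<in> {i..j}"
          using Rprop[OF ab] by blast
        have eij: "eqv i j" using ij(2,3) by blast
        show ?thesis
        proof (cases "eqv a b")
          case True
          then have "a \<in> cls a" "b \<in> cls a" using abS by (auto simp: cls_def)
          moreover have "cls a \<in> blocks n w" using BK2 abS by blast
          ultimately show ?thesis using E by fastforce
        next
          case nab: False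
          have lab: "le a b" using ab by blast
          then have nba: "\<not> le b a" using nab by blast
          have inv: "inv w a < inv w b" using W_ord_inv[OF abS lab nba] .
          show ?thesis
          proof (cases "i = a")
            case True
            have "b \<noteq> a" using nab by blast
            moreover have "b \<noteq> j" using nab eij True by blast
            ultimately have k: "a < b" "b < j" using ij True by auto
            have jS: "j \<in> {1..n}" using Rsub[OF ij(2)] by auto
            have "a \<in> cls a" "j \<in> cls a" "b \<notin> cls a" using abS jS eij True nab by (auto simp: cls_def)
            moreover have "cls a \<in> blocks n w" using BK2 abS by blast
            ultimately show ?thesis using I k inv by blast
          next
            case False
            then have ib: "i = b" using ij by blast
            have "a \<noteq> b" using nab by blast
            moreover have "a \<noteq> j" using nab eij ib by blast
            ultimately have k: "b < a" "a < j" using ij ib by auto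
            have jS: "j \<in> {1..n}" using Rsub[OF ij(2)] by auto
            have "b \<in> cls b" "j \<in> cls b" "a \<notin> cls b" using abS jS eij ib nab by (auto simp: cls_def)
            moreover have "cls b \<in> blocks n w" using BK2 abS by blast
            ultimately show ?thesis using I k inv by blast
          qed
        qed
      qed
      then show "x \<in> coneR n R" using xV by (auto simp: coneR_def)
    qed
  qed
  then show ?thesis using perm by blast
qed

end



definition shrel :: "nat \<Rightarrow> nat \<Rightarrow> nat set \<Rightarrow> (nat \<times> nat) set" where
  "shrel i j T = {(i,j),(j,i)} \<union> {(k,i)|k. i < k \<and> k < j \<and> k \<in> T} \<union> {(i,k)|k. i < k \<and> k < j \<and> k \<notin> T}"

lemma Q_coneR: "Q n i j T = coneR n (shrel i j T)"
  unfolding Q_def coneR_def shrel_def by (auto intro: antisym)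

lemma shrel_good:
  assumes "1 \<le> i" "i < j" "j \<le> n" "shrel i j T \<subseteq> R" "(u,v) \<in> shrel i j T"
  shows "\<exists>i j. i < j \<and> (i,j) \<in> R \<and> (j,i) \<in> R \<and> (i = u \<or> i = v) \<and> u \<in> {i..j} \<and> v \<in> {i..j}
        \<and> (\<forall>k. i < k \<and> k < j \<longrightarrow> (k,i) \<in> R \<or> (i,k) \<in> R)"
proof (rule exI[of _ i], rule exI[of _ j], intro conjI allI impI)
  show "i < j" by fact
  show "(i,j) \<in> R" "(j,i) \<in> R" using assms(4) by (auto simp: shrel_def)
  show "i = u \<or> i = v" "u \<in> {i..j}" "v \<in> {i..j}" using assms(2,5) by (auto simp: shrel_def)
  fix k assume "i < k \<and> k < j"
  then show "(k,i) \<in> R \<or> (i,k) \<in> R" using assms(4) by (cases "k \<in> T") (auto simp: shrel_def)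
qed

lemma part1:
  assumes "X \<in> shard_intersections n"
  shows "\<exists>w. w permutes {1..n} \<and> X = coneC n w"
proof -
  obtain S where S: "X = VA n \<inter> \<Inter>S" "finite S" "S \<subseteq> shardsA n"
    using assms unfolding shard_intersections_def by blast
  have "\<forall>Y\<in>S. \<exists>p. 1 \<le> fst p \<and> fst p < fst (snd p) \<and> fst (snd p) \<le> n \<and> Y = Q n (fst p) (fst (snd p)) (snd (snd p))"
  proof
    fix Y assume "Y \<in> S"
    then have "Y \<in> shardsA n" using S(3) by blast
    then obtain i j T where "1 \<le> i" "i < j" "j \<le> n" "Y = Q n i j T" unfolding shardsA_eq by blast
    then show "\<exists>p. 1 \<le> fst p \<and> fst p < fst (snd p) \<and> fst (snd p) \<le> n \<and> Y = Q n (fst p) (fst (snd p)) (snd (snd p))"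
      by (intro exI[of _ "(i,j,T)"]) simp
  qed
  from bchoice[OF this] obtain f where f0: "\<forall>Y\<in>S. 1 \<le> fst (f Y) \<and> fst (f Y) < fst (snd (f Y)) \<and> fst (snd (f Y)) \<le> n
      \<and> Y = Q n (fst (f Y)) (fst (snd (f Y))) (snd (snd (f Y)))"
    by blast
  have f: "\<And>Y. Y \<in> S \<Longrightarrow> 1 \<le> fst (f Y) \<and> fst (f Y) < fst (snd (f Y)) \<and> fst (snd (f Y)) \<le> n
      \<and> Y = Q n (fst (f Y)) (fst (snd (f Y))) (snd (snd (f Y)))" using f0 by blast
  define R where "R = (\<Union>Y\<in>S. shrel (fst (f Y)) (fst (snd (f Y))) (snd (snd (f Y))))"
  have XR: "X = coneR n R"
  proof
    show "X \<subseteq> coneR n R"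
    proof
      fix x assume x: "x \<in> X"
      have "\<forall>(a,b)\<in>R. x a \<le> x b"
      proof (clarify)
        fix a b assume "(a,b) \<in> R"
        then obtain Y where Y: "Y \<in> S" "(a,b) \<in> shrel (fst (f Y)) (fst (snd (f Y))) (snd (snd (f Y)))"
          unfolding R_def by blast
        have "x \<in> Y" using x Y S(1) by blast
        then have "x \<in> coneR n (shrel (fst (f Y)) (fst (snd (f Y))) (snd (snd (f Y))))"
          using f[OF Y(1)] Q_coneR by metis
        then show "x a \<le> x b" using Y(2) unfolding coneR_def by blast
      qed
      then show "x \<in> coneR n R" using x S(1) by (auto simp: coneR_def)
    qed
    show "coneR n R \<subseteq> X"
    proof
      fix x assume x: "x \<in> coneR n R"
      have "x \<in> Y" if Y: "Y \<in> S" for Y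
      proof -
        have "x \<in> coneR n (shrel (fst (f Y)) (fst (snd (f Y))) (snd (snd (f Y))))"
          using x Y unfolding coneR_def R_def by blast
        then show ?thesis using f[OF Y] Q_coneR by metis
      qed
      then show "x \<in> X" using x S(1) by (auto simp: coneR_def)
    qed
  qed
  have "goodR n R"
    unfolding goodR_def
  proof (intro conjI)
    show "R \<subseteq> {1..n} \<times> {1..n}"
    proof
      fix p assume "p \<in> R"
      then obtain Y where Y: "Y \<in> S" "p \<in> shrel (fst (f Y)) (fst (snd (f Y))) (snd (snd (f Y)))"
        unfolding R_def by blast
      then show "p \<in> {1..n} \<times> {1..n}" using f[OF Y(1)] by (auto simp: shrel_def)
    qed
    show "\<forall>(u,v)\<in>R. \<exists>i j. i < j \<and> (i,j) \<in> R \<and> (j,i) \<in> R \<and> (i = u \<or> i = v) \<and> u \<in> {i..j} \<and> v \<in> {i..j}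
        \<and> (\<forall>k. i < k \<and> k < j \<longrightarrow> (k,i) \<in> R \<or> (i,k) \<in> R)"
    proof (clarify)
      fix u v assume "(u,v) \<in> R"
      then obtain Y where Y: "Y \<in> S" "(u,v) \<in> shrel (fst (f Y)) (fst (snd (f Y))) (snd (snd (f Y)))"
        unfolding R_def by blast
      have sub: "shrel (fst (f Y)) (fst (snd (f Y))) (snd (snd (f Y))) \<subseteq> R" using Y(1) unfolding R_def by blast
      show "\<exists>i j. i < j \<and> (i,j) \<in> R \<and> (j,i) \<in> R \<and> (i = u \<or> i = v) \<and> u \<in> {i..j} \<and> v \<in> {i..j}
        \<and> (\<forall>k. i < k \<and> k < j \<longrightarrow> (k,i) \<in> R \<or> (i,k) \<in> R)"
        using shrel_good[OF _ _ _ sub Y(2)] f[OF Y(1)] by blast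
    qed
  qed
  then interpret comb n R by unfold_locales
  obtain w where "w permutes {1..n}" "coneC n w = coneR n R" using exists_w by blast
  then show ?thesis using XR by blast
qed

lemma part2:
  assumes w: "w permutes {1..n}"
  shows "coneC n w \<in> shard_intersections n"
proof -
  define F where "F = {Q n i j {k. inv w k < inv w i} | i j. i < j \<and> (\<exists>Bk\<in>blocks n w. i \<in> Bk \<and> j \<in> Bk)}"
  have blS: "Bk \<subseteq> {1..n}" if Bkb: "Bk \<in> blocks n w" for Bk
  proof -
    obtain a b where "Bk = w ` {a..b}" "1 \<le> a" "b \<le> n" using Bkb unfolding blocks_def by blast
    then have "Bk \<subseteq> w ` {1..n}" by auto
    then show ?thesis using permutes_image[OF w] by simp
  qed
  have Fsub: "F \<subseteq> (\<lambda>(i,j). Q n i j {k. inv w k < inv w i}) ` ({1..n} \<times> {1..n})"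
  proof
    fix Y assume "Y \<in> F"
    then obtain i j Bk where ij: "Y = Q n i j {k. inv w k < inv w i}" "Bk \<in> blocks n w" "i \<in> Bk" "j \<in> Bk"
      unfolding F_def by blast
    then have "(i,j) \<in> {1..n} \<times> {1..n}" using blS by blast
    then show "Y \<in> (\<lambda>(i,j). Q n i j {k. inv w k < inv w i}) ` ({1..n} \<times> {1..n})" using ij(1) by force
  qed
  have Ffin: "finite F" by (rule finite_subset[OF Fsub]) auto
  have Fsh: "F \<subseteq> shardsA n"
  proof
    fix Y assume "Y \<in> F"
    then obtain i j Bk where ij: "Y = Q n i j {k. inv w k < inv w i}" "i < j" "Bk \<in> blocks n w" "i \<in> Bk" "j \<in> Bk"
      unfolding F_def by blast
    then have "i \<in> {1..n}" "j \<in> {1..n}" using blS by blast+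
    then show "Y \<in> shardsA n" unfolding shardsA_eq using ij by auto
  qed
  have invinj: "\<And>a b. inv w a = inv w b \<Longrightarrow> a = b" by (metis permutes_inverses(1)[OF w])
  have "coneC n w = VA n \<inter> \<Inter>F"
  proof
    show "coneC n w \<subseteq> VA n \<inter> \<Inter>F"
    proof
      fix x assume x: "x \<in> coneC n w"
      have xV: "x \<in> VA n" and E: "\<forall>Bk \<in> blocks n w. \<forall>i \<in> Bk. \<forall>j \<in> Bk. x i = x j"
        and I: "\<forall>Bk \<in> blocks n w. \<forall>i \<in> Bk. \<forall>j \<in> Bk. \<forall>k. i < k \<and> k < j \<and> k \<notin> Bk \<longrightarrow>
          (inv w k < inv w i \<longrightarrow> x k \<le> x i) \<and> (inv w i < inv w k \<longrightarrow> x i \<le> x k)"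
        using x unfolding coneC_def by blast+
      have "x \<in> Y" if Y: "Y \<in> F" for Y
      proof -
        obtain i j Bk where ij: "Y = Q n i j {k. inv w k < inv w i}" "i < j" "Bk \<in> blocks n w" "i \<in> Bk" "j \<in> Bk"
          using Y unfolding F_def by blast
        have "\<forall>k. i < k \<and> k < j \<longrightarrow> (k \<in> {k. inv w k < inv w i} \<longrightarrow> x k \<le> x i) \<and> (k \<notin> {k. inv w k < inv w i} \<longrightarrow> x i \<le> x k)"
        proof (intro allI impI conjI)
          fix k assume k: "i < k \<and> k < j" "k \<in> {k. inv w k < inv w i}"
          show "x k \<le> x i"
          proof (cases "k \<in> Bk")
            case True
            have "x k = x i" using E ij(3) True ij(4) by blast
            then show ?thesis by simp
          next
            case False
            have "(inv w k < inv w i \<longrightarrow> x k \<le> x i)" using I ij(3,4,5) k(1) False by blast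
            then show ?thesis using k(2) by simp
          qed
        next
          fix k assume k: "i < k \<and> k < j" "k \<notin> {k. inv w k < inv w i}"
          show "x i \<le> x k"
          proof (cases "k \<in> Bk")
            case True
            have "x k = x i" using E ij(3) True ij(4) by blast
            then show ?thesis by simp
          next
            case False
            have "inv w k \<noteq> inv w i" using invinj k by auto
            then have "inv w i < inv w k" using k by auto
            moreover have "(inv w i < inv w k \<longrightarrow> x i \<le> x k)" using I ij(3,4,5) k(1) False by blast
            ultimately show ?thesis by simp
          qed
        qed
        moreover have "x i = x j" using E ij(3,4,5) by blast
        ultimately show ?thesis using xV unfolding ij(1) Q_def by blast
      qed
      then show "x \<in> VA n \<inter> \<Inter>F" using xV by blast
    qed
    show "VA n \<inter> \<Inter>F \<subseteq> coneC n w"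
    proof
      fix x assume x: "x \<in> VA n \<inter> \<Inter>F"
      have QF: "x \<in> Q n i j {k. inv w k < inv w i}" if "i < j" "Bk \<in> blocks n w" "i \<in> Bk" "j \<in> Bk" for i j Bk
        using x that unfolding F_def by blast
      have E: "\<forall>Bk \<in> blocks n w. \<forall>i \<in> Bk. \<forall>j \<in> Bk. x i = x j"
      proof (intro ballI)
        fix Bk i j assume h: "Bk \<in> blocks n w" "i \<in> Bk" "j \<in> Bk"
        show "x i = x j"
        proof (cases i j rule: linorder_cases)
          case less then show ?thesis using QF[OF less h] by (simp add: Q_def)
        next
          case equal then show ?thesis by simp
        next
          case greater then show ?thesis using QF[OF greater h(1,3,2)] by (simp add: Q_def)
        qed
      qed
      have I: "\<forall>Bk \<in> blocks n w. \<forall>i \<in> Bk. \<forall>j \<in> Bk. \<forall>k. i < k \<and> k < j \<and> k \<notin> Bk \<longrightarrow>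
          (inv w k < inv w i \<longrightarrow> x k \<le> x i) \<and> (inv w i < inv w k \<longrightarrow> x i \<le> x k)"
      proof (intro ballI allI impI conjI)
        fix Bk i j k assume h: "Bk \<in> blocks n w" "i \<in> Bk" "j \<in> Bk" "i < k \<and> k < j \<and> k \<notin> Bk"
        have q: "x \<in> Q n i j {k. inv w k < inv w i}" using QF[of i j Bk] h by simp
        {
          assume "inv w k < inv w i"
          then show "x k \<le> x i" using q h unfolding Q_def by auto
        }
        {
          assume "inv w i < inv w k"
          then show "x i \<le> x k" using q h unfolding Q_def by auto
        }
      qed
      show "x \<in> coneC n w" unfolding coneC_def using x E I by blast
    qed
  qed
  then show ?thesis unfolding shard_intersections_def using Ffin Fsh by blast
qed

theorem mainTheorem4:
  fixes n :: nat
  shows "(\<forall>X \<in> shard_intersections n. \<exists>w. w permutes {1..n} \<and> X = coneC n w) \<and>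
         (\<forall>w. w permutes {1..n} \<longrightarrow> coneC n w \<in> shard_intersections n)"
  using part1 part2 by blast


end
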